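(* Assume the setup below and let $\boldsymbol{\lambda}\in\mathcal{P}(l,n)$. Then the $J$-heart $\tau_{\mathbf{r}}(w(\boldsymbol{\lambda}))_J$ of the partition $\tau_{\mathbf{r}}(w(\boldsymbol{\lambda}))$ is the partition whose ($0$-shifted) $\beta$-number is $\chi(\tilde{\mathbf{C}}(\boldsymbol{\lambda}))$ arranged in decreasing order.
   Context: Fix positive integers $l,n$. A partition $\lambda=(\lambda_1\ge\lambda_2\ge\dots)$ has $\lambda_i=0$ for large $i$; $Y(\lambda)=\{(a,b):a\ge1,1\le b\le\lambda_a\}$; the content of $(a,b)$ is $b-a$. $\mathcal{P}(l,n)$ is the set of $l$-multipartitions $\boldsymbol{\lambda}=(\lambda^{(0)},\dots,\lambda^{(l-1)})$ of $n$. For $r\in\mathbb{Z}$, $\beta^r(\lambda)=(\lambda_i+r+1-i)_{i\ge1}$, $\beta(\lambda)=\beta^0(\lambda)$; a strictly decreasing integer sequence stabilising with respect to $r$ (i.e. $C_i=r+1-i$ for large $i$) is $\beta^r$ of a unique partition. For a strictly decreasing integer sequence $C$, $S^iC=(C_1+i,C_2+i,\dots)$. For an $l$-tuple $\mathbf{C}=(C^0,\dots,C^{l-1})$ of strictly decreasing integer sequences, $\chi(\mathbf{C})=\{l(C^q_i-1)+q+1:0\le q\le l-1,\,i\ge1\}$. A node is removable if deleting it leaves a Young diagram; for $J\subseteq\{0,\dots,l-1\}$ it is $J$-removable if removable with content congruent mod $l$ to some $j\in J$; the $J$-heart $\lambda_J$ is obtained by removing $J$-removable nodes as long as possible. Parameters: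 $H_1,\dots,H_{l-1}\in\mathbb{Q}$, $H_0=-(H_1+\dots+H_{l-1})$, $d$ a positive integer with $dH_i\in\mathbb{Z}$; $\theta=(1+H_0,H_1,\dots,H_{l-1})$. $S_l$ = permutations of $\{0,\dots,l-1\}$ generated by $s_i$ ($1\le i\le l-1$) transposing $i-1,i$, acting on $\mathbb{Q}^l$ by: $s_i\cdot\theta$ has entry $\theta_{i-1}+\theta_i$ at $i-1$, $-\theta_i$ at $i$, $\theta_i+\theta_{i+1}$ at $i+1$, otherwise unchanged (indices mod $l$). $R\subset\mathbb{Z}^l$ is generated by $\alpha_i=-e_{i-1}+2e_i-e_{i+1}$ (indices mod $l$); $\tilde{S}_l=R\rtimes S_l$ acts on $\{\theta\in\mathbb{Q}^l:\sum\theta_i=1\}$ with $R$ by translations; $\mathbb{Z}^l_0$ = integer vectors with coordinate sum $0$; $\phi(\mathbf{r})=\sum_j(r_{j-1}-r_j)e_j$ (indices mod $l$). Fix $w_\theta=\phi(\mathbf{r})w\in\tilde{S}_l$ ($\mathbf{r}\in\mathbb{Z}^l_0$, $w\in S_l$) with $\boldsymbol{\epsilon}=w_\theta\cdot\theta$ satisfying $0\le\varepsilon_i\le1$; $J=\{j:\varepsilon_j=0\}$; then $d\boldsymbol{\epsilon}\in\mathbb{Z}^l$. Let $m_i(\mathbf{c})=c_0+\dots+c_i$ and $I_t=\{p:m_p(d\boldsymbol{\epsilon})=t\}$ for $0\le t\le d$. For $\mathbf{s}\in\mathbb{Z}^l$ with $s=\sum s_i$, $\tau_{\mathbf{s}}(\boldsymbol{\lambda})$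 is the partition whose $s$-shifted $\beta$-number is $\chi(\beta^{s_0}(\lambda^{(0)}),\dots,\beta^{s_{l-1}}(\lambda^{(l-1)}))$ arranged decreasingly; $w(\boldsymbol{\lambda})$ has $p$-th component $\lambda^{(w^{-1}(p))}$. Put $C^p(\boldsymbol{\lambda})=\beta^{r_p}(\lambda^{(w^{-1}(p))})$; for $1\le t\le d-1$, $C_{[t]}=\biguplus_{p\in I_t}C^p$ (multiset union) and $C_{[0]}=C_{[d]}=\biguplus_{p\in I_0}S^{-1}C^p\uplus\biguplus_{p\in I_d}C^p$. $\tilde{\mathbf{C}}(\boldsymbol{\lambda})=(\tilde{C}^0,\dots,\tilde{C}^{l-1})$ is the unique $l$-tuple of strictly decreasing integer sequences with $\tilde{C}_{[t]}=C_{[t]}(\boldsymbol{\lambda})$ for all $0\le t\le d$ (same recipe), $\tilde{C}^p\subseteq\tilde{C}^{p-1}$ for all $0\ne p\in J$, and $S^{-1}\tilde{C}^0\subseteq\tilde{C}^{l-1}$ if $0\in I_0$. *)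

theory Defs
  imports Complex_Main "HOL-Combinatorics.Permutations"
begin

text \<open>A partition is a function lam :: nat => nat; lam i is the i-th part for i >= 1.
  The unused value at index 0 is normalised to 0.\<close>

definition is_partition :: "(nat \<Rightarrow> nat) \<Rightarrow> bool" where
  "is_partition lam \<longleftrightarrow> lam 0 = 0 \<and> (\<forall>i\<ge>1. lam (Suc i) \<le> lam i) \<and> (\<exists>N. \<forall>i\<ge>N. lam i = 0)"

definition young :: "(nat \<Rightarrow> nat) \<Rightarrow> (nat \<times> nat) set" where
  "young lam = {(a, b). 1 \<le> a \<and> 1 \<le> b \<and> b \<le> lam a}"

definition psize :: "(nat \<Rightarrow> nat) \<Rightarrow> nat" where
  "psize lam = card (young lam)"

definition content :: "nat \<times> nat \<Rightarrow> int" where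
  "content x = int (snd x) - int (fst x)"

text \<open>beta^r(lambda) = (lambda_i + r + 1 - i)_{i>=1}, represented by its set of values
  (a strictly decreasing sequence is determined by its set of values).\<close>
definition beta_set :: "int \<Rightarrow> (nat \<Rightarrow> nat) \<Rightarrow> int set" where
  "beta_set r lam = {int (lam i) + r + 1 - int i | i. i \<ge> 1}"

definition multipartitions :: "nat \<Rightarrow> nat \<Rightarrow> (nat \<Rightarrow> nat \<Rightarrow> nat) set" where
  "multipartitions l n = {lams. (\<forall>q<l. is_partition (lams q)) \<and> (\<Sum>q<l. psize (lams q)) = n}"

definition removable :: "(nat \<Rightarrow> nat) \<Rightarrow> nat \<times> nat \<Rightarrow> bool" where
  "removable lam x \<longleftrightarrow> x \<in> young lam \<and> (\<exists>mu. is_partition mu \<and> young mu = young lam - {x})"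

definition J_removable :: "nat \<Rightarrow> nat set \<Rightarrow> (nat \<Rightarrow> nat) \<Rightarrow> nat \<times> nat \<Rightarrow> bool" where
  "J_removable l J lam x \<longleftrightarrow> removable lam x \<and> (\<exists>j\<in>J. content x mod int l = int j mod int l)"

definition remove_step :: "nat \<Rightarrow> nat set \<Rightarrow> (nat \<Rightarrow> nat) \<Rightarrow> (nat \<Rightarrow> nat) \<Rightarrow> bool" where
  "remove_step l J lam mu \<longleftrightarrow> is_partition lam \<and> is_partition mu \<and>
     (\<exists>x. J_removable l J lam x \<and> young mu = young lam - {x})"

definition heart :: "nat \<Rightarrow> nat set \<Rightarrow> (nat \<Rightarrow> nat) \<Rightarrow> (nat \<Rightarrow> nat)" where
  "heart l J lam = (THE nu. (remove_step l J)\<^sup>*\<^sup>* lam nu \<and> \<not> (\<exists>x. J_removable l J nu x))"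

definition chi :: "nat \<Rightarrow> (nat \<Rightarrow> int set) \<Rightarrow> int set" where
  "chi l C = {int l * (c - 1) + int q + 1 | q c. q < l \<and> c \<in> C q}"

definition tau :: "nat \<Rightarrow> (nat \<Rightarrow> int) \<Rightarrow> (nat \<Rightarrow> nat \<Rightarrow> nat) \<Rightarrow> (nat \<Rightarrow> nat)" where
  "tau l s lams = (THE nu. is_partition nu \<and>
      beta_set (\<Sum>q<l. s q) nu = chi l (\<lambda>q. beta_set (s q) (lams q)))"

definition perm_mp :: "(nat \<Rightarrow> nat) \<Rightarrow> (nat \<Rightarrow> nat \<Rightarrow> nat) \<Rightarrow> (nat \<Rightarrow> nat \<Rightarrow> nat)" where
  "perm_mp w lams = (\<lambda>p. lams (inv w p))"

text \<open>theta = (1 + H_0, H_1, ..., H_{l-1}) with H_0 = -(H_1 + ... + H_{l-1}).\<close>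
definition theta :: "nat \<Rightarrow> (nat \<Rightarrow> rat) \<Rightarrow> nat \<Rightarrow> rat" where
  "theta l H i = (if i = 0 then 1 - (\<Sum>j\<in>{1..<l}. H j) else H i)"

definition alpha :: "nat \<Rightarrow> nat \<Rightarrow> nat \<Rightarrow> int" where
  "alpha l i j = (if j = i mod l then 2 else 0) - (if j = (i + l - 1) mod l then 1 else 0)
                  - (if j = (i + 1) mod l then 1 else 0)"

text \<open>s_i . theta = theta - theta_i alpha_i (for l >= 3 this is exactly: entry
  theta_{i-1}+theta_i at i-1, -theta_i at i, theta_i+theta_{i+1} at i+1, rest unchanged).\<close>
definition s_act :: "nat \<Rightarrow> nat \<Rightarrow> (nat \<Rightarrow> rat) \<Rightarrow> (nat \<Rightarrow> rat)" where
  "s_act l i th = (\<lambda>j. th j - th i * of_int (alpha l i j))"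

definition perm_word :: "nat list \<Rightarrow> (nat \<Rightarrow> nat)" where
  "perm_word ws = foldr (\<lambda>i f. Transposition.transpose (i - 1) i \<circ> f) ws id"

definition act_word :: "nat \<Rightarrow> nat list \<Rightarrow> (nat \<Rightarrow> rat) \<Rightarrow> (nat \<Rightarrow> rat)" where
  "act_word l ws th = foldr (s_act l) ws th"

definition Sl_act :: "nat \<Rightarrow> (nat \<Rightarrow> nat) \<Rightarrow> (nat \<Rightarrow> rat) \<Rightarrow> (nat \<Rightarrow> rat)" where
  "Sl_act l w th = act_word l (SOME ws. set ws \<subseteq> {1..<l} \<and> perm_word ws = w) th"

definition phi :: "nat \<Rightarrow> (nat \<Rightarrow> int) \<Rightarrow> nat \<Rightarrow> int" where
  "phi l r j = r ((j + l - 1) mod l) - r j"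

text \<open>epsilon = w_theta . theta with w_theta = phi(r) w (phi(r) acting by translation).\<close>
definition eps :: "nat \<Rightarrow> (nat \<Rightarrow> rat) \<Rightarrow> (nat \<Rightarrow> int) \<Rightarrow> (nat \<Rightarrow> nat) \<Rightarrow> nat \<Rightarrow> rat" where
  "eps l H r w = (\<lambda>j. Sl_act l w (theta l H) j + of_int (phi l r j))"

definition Jset :: "nat \<Rightarrow> (nat \<Rightarrow> rat) \<Rightarrow> nat set" where
  "Jset l e = {j. j < l \<and> e j = 0}"

definition Iset :: "nat \<Rightarrow> nat \<Rightarrow> (nat \<Rightarrow> rat) \<Rightarrow> nat \<Rightarrow> nat set" where
  "Iset l d e t = {p. p < l \<and> (\<Sum>k\<le>p. of_nat d * e k) = of_nat t}"

definition Cseq :: "(nat \<Rightarrow> int) \<Rightarrow> (nat \<Rightarrow> nat) \<Rightarrow> (nat \<Rightarrow> nat \<Rightarrow> nat) \<Rightarrow> nat \<Rightarrow> int set" where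
  "Cseq r w lams p = beta_set (r p) (lams (inv w p))"

text \<open>C_[t] as a multiset of integers, given by its multiplicity function
  (S^{-1} C contains x iff C contains x + 1).\<close>
definition Cbr :: "nat \<Rightarrow> nat \<Rightarrow> (nat \<Rightarrow> rat) \<Rightarrow> (nat \<Rightarrow> int set) \<Rightarrow> nat \<Rightarrow> int \<Rightarrow> nat" where
  "Cbr l d e C t x =
     (if 1 \<le> t \<and> t \<le> d - 1 then card {p \<in> Iset l d e t. x \<in> C p}
      else card {p \<in> Iset l d e 0. x + 1 \<in> C p} + card {p \<in> Iset l d e d. x \<in> C p})"

text \<open>Strictly decreasing integer sequences correspond exactly to infinite subsets of Z
  bounded above (their value sets).\<close>
definition Ctilde :: "nat \<Rightarrow> nat \<Rightarrow> (nat \<Rightarrow> rat) \<Rightarrow> (nat \<Rightarrow> int set) \<Rightarrow> (nat \<Rightarrow> int set)" where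
  "Ctilde l d e C = (THE Ct.
      (\<forall>q<l. infinite (Ct q) \<and> bdd_above (Ct q)) \<and> (\<forall>q\<ge>l. Ct q = {}) \<and>
      (\<forall>t\<le>d. Cbr l d e Ct t = Cbr l d e C t) \<and>
      (\<forall>p\<in>Jset l e. p \<noteq> 0 \<longrightarrow> Ct p \<subseteq> Ct (p - 1)) \<and>
      (0 \<in> Iset l d e 0 \<longrightarrow> {x. x + 1 \<in> Ct 0} \<subseteq> Ct (l - 1)))"

end

theory Submission
  imports Defs
begin



definition vb :: "int \<Rightarrow> (nat \<Rightarrow> nat) \<Rightarrow> nat \<Rightarrow> int" where
  "vb r lam i = int (lam i) + r + 1 - int i"

lemma beta_set_vb: "beta_set r lam = vb r lam ` {1..}"
  unfolding beta_set_def vb_def by auto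

lemma part_mono: assumes "is_partition lam" "1 \<le> i" "i \<le> j" shows "lam j \<le> lam i"
  using assms(3)
proof (induction j rule: dec_induct)
  case base then show ?case by simp
next
  case (step k)
  have "lam (Suc k) \<le> lam k" using assms(1,2) step.hyps unfolding is_partition_def by auto
  then show ?case using step.IH by simp
qed

lemma vb_strict: assumes "is_partition lam" "1 \<le> i" "i < j" shows "vb r lam j < vb r lam i"
  using part_mono[OF assms(1,2), of j] assms(3) unfolding vb_def by simp

lemma vb_inj: assumes "is_partition lam" shows "inj_on (vb r lam) {1..}"
  by (rule inj_onI) (metis assms atLeast_iff linorder_neqE_nat vb_strict less_irrefl)

lemma part_tail: assumes "is_partition lam" obtains K where "1 \<le> K" "\<forall>i\<ge>K. lam i = 0"
proof -
  obtain N where "\<forall>i\<ge>N. lam i = 0" using assms unfolding is_partition_def by auto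
  then show ?thesis using that[of "max 1 N"] by auto
qed

lemma count_above: assumes "is_partition lam" "1 \<le> i"
  shows "card {z \<in> beta_set r lam. z > vb r lam i} = i - 1"
proof -
  have "{z \<in> beta_set r lam. z > vb r lam i} = vb r lam ` {1..<i}"
  proof (safe)
    fix z assume "z \<in> beta_set r lam" "z > vb r lam i"
    then obtain j where j: "j \<ge> 1" "z = vb r lam j" unfolding beta_set_vb by auto
    have "j < i" using j \<open>z > vb r lam i\<close> vb_strict[OF assms(1), of i j r] vb_strict[OF assms(1) j(1), of i r]
      by (metis assms(2) less_asym linorder_neqE_nat)
    then show "z \<in> vb r lam ` {1..<i}" using j by auto
  next
    fix j assume "j \<in> {1..<i}"
    then show "vb r lam j \<in> beta_set r lam" unfolding beta_set_vb by auto
    show "vb r lam i < vb r lam j" using vb_strict[OF assms(1)] \<open>j \<in> {1..<i}\<close> by auto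
  qed
  moreover have "card (vb r lam ` {1..<i}) = i - 1"
  proof -
    have "inj_on (vb r lam) {1..<i}" by (rule inj_on_subset[OF vb_inj[OF assms(1)]]) auto
    then show ?thesis by (simp add: card_image)
  qed
  ultimately show ?thesis by simp
qed

lemma beta_inj: assumes "is_partition lam" "is_partition mu" "beta_set r lam = beta_set r mu"
  shows "lam = mu"
proof
  fix i show "lam i = mu i"
  proof (cases "i = 0")
    case True then show ?thesis using assms unfolding is_partition_def by simp
  next
    case False
    have "vb r lam i \<in> beta_set r mu" using assms(3) False unfolding beta_set_vb by auto
    then obtain j where j: "j \<ge> 1" "vb r lam i = vb r mu j" unfolding beta_set_vb by auto
    have "i - 1 = j - 1" using count_above[OF assms(1), of i r] count_above[OF assms(2) j(1), of r] j assms(3) False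
      by simp
    then have "i = j" using j False by simp
    then show ?thesis using j unfolding vb_def by simp
  qed
qed

lemma charge: assumes "is_partition lam"
  obtains N0 where "\<And>N. N \<le> N0 \<Longrightarrow> {..<N} \<subseteq> beta_set r lam \<and> finite (beta_set r lam \<inter> {N..})
     \<and> card (beta_set r lam \<inter> {N..}) = nat (r + 1 - N) \<and> r + 1 - N \<ge> 1"
proof -
  obtain K where K: "1 \<le> K" "\<forall>i\<ge>K. lam i = 0" using part_tail[OF assms] by blast
  have "{..<N} \<subseteq> beta_set r lam \<and> finite (beta_set r lam \<inter> {N..})
     \<and> card (beta_set r lam \<inter> {N..}) = nat (r + 1 - N) \<and> r + 1 - N \<ge> 1" if N: "N \<le> r + 1 - int K" for N :: int
  proof -
    define i0 where "i0 = nat (r + 1 - N)"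
    have i0K: "i0 \<ge> K" using N unfolding i0_def by linarith
    have vbi0: "vb r lam i0 = N" using K i0K unfolding vb_def i0_def using N by auto
    have sub: "{..<N} \<subseteq> beta_set r lam"
    proof
      fix y assume "y \<in> {..<N}"
      then have y: "y < N" by simp
      define i where "i = nat (r + 1 - y)"
      have "i \<ge> K" using y N unfolding i_def by linarith
      then have "vb r lam i = y" using K y N unfolding vb_def i_def by auto
      moreover have "i \<ge> 1" using \<open>i \<ge> K\<close> K by simp
      ultimately show "y \<in> beta_set r lam" unfolding beta_set_vb by auto
    qed
    have eq: "beta_set r lam \<inter> {N..} = vb r lam ` {1..i0}"
    proof (intro equalityI subsetI)
      fix z assume "z \<in> beta_set r lam \<inter> {N..}"
      then have z: "z \<in> beta_set r lam" "z \<in> {N..}" by auto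
      then obtain i where i: "i \<ge> 1" "z = vb r lam i" unfolding beta_set_vb by auto
      have "i \<le> i0"
      proof (rule ccontr)
        assume "\<not> i \<le> i0"
        then have "vb r lam i < vb r lam i0" using vb_strict[OF assms, of i0 i] i0K K by simp
        then show False using z i vbi0 by simp
      qed
      then show "z \<in> vb r lam ` {1..i0}" using i by auto
    next
      fix z assume "z \<in> vb r lam ` {1..i0}"
      then obtain i where i: "i \<in> {1..i0}" "z = vb r lam i" by auto
      then have "vb r lam i \<in> beta_set r lam" unfolding beta_set_vb by auto
      moreover have "vb r lam i0 \<le> vb r lam i"
        using vb_strict[OF assms, of i i0 r] i by (cases "i = i0") auto
      ultimately show "z \<in> beta_set r lam \<inter> {N..}" using vbi0 i by simp
    qed
    have "inj_on (vb r lam) {1..i0}" by (rule inj_on_subset[OF vb_inj[OF assms]]) auto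
    then have "card (beta_set r lam \<inter> {N..}) = i0" unfolding eq by (simp add: card_image)
    then show ?thesis using sub eq i0K K unfolding i0_def using N by auto
  qed
  then show ?thesis by (intro that[of "r + 1 - int K"]) blast
qed

lemma beta_bdd: assumes "is_partition lam" shows "bdd_above (beta_set r lam)"
proof -
  have "\<forall>z\<in>beta_set r lam. z \<le> vb r lam 1"
  proof
    fix z assume "z \<in> beta_set r lam"
    then obtain i where i: "i \<ge> 1" "z = vb r lam i" unfolding beta_set_vb by auto
    show "z \<le> vb r lam 1"
    proof (cases "i = 1")
      case False then show ?thesis using vb_strict[OF assms, of 1 i r] i by simp
    qed (use i in simp)
  qed
  then show ?thesis by (auto simp: bdd_above_def)
qed

lemma conv: assumes "{..<N} \<subseteq> S" "finite (S \<inter> {N..})" "card (S \<inter> {N..}) = nat (r+1-N)" "r + 1 - N \<ge> 0"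
  shows "\<exists>lam. is_partition lam \<and> beta_set r lam = S"
proof -
  define T where "T = S \<inter> {N..}"
  define m where "m = card T"
  have mi: "int m = r + 1 - N" using assms(3,4) unfolding m_def T_def by simp
  obtain xs where xs: "sorted_wrt (<) xs" "set xs = T" "length xs = m"
    using finite_set_strict_sorted[of T] assms(2) unfolding T_def m_def by metis
  define s where "s i = xs ! (m - i)" for i
  have f1: "s j < s i" if "1 \<le> i" "i < j" "j \<le> m" for i j
    using sorted_wrt_nth_less[OF xs(1), of "m - j" "m - i"] that xs(3) unfolding s_def by simp
  have f2: "s i - s j \<ge> int (j - i)" if "1 \<le> i" "i \<le> j" "j \<le> m" for i j
    using that(2,3)
  proof (induction j rule: dec_induct)
    case base then show ?case by simp
  next
    case (step k)
    have "s (Suc k) < s k" using f1[of k "Suc k"] step that by simp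
    then show ?case using step by simp
  qed
  have sT: "s i \<in> T" if "1 \<le> i" "i \<le> m" for i
    using that xs unfolding s_def by (metis diff_less less_le_trans nth_mem zero_less_one)
  have f3: "s i - r - 1 + int i \<ge> 0" if "1 \<le> i" "i \<le> m" for i
  proof -
    have "s m \<ge> N" using sT[of m] that unfolding T_def by auto
    then show ?thesis using f2[of i m] that mi by simp
  qed
  define lam where "lam i = (if 1 \<le> i \<and> i \<le> m then nat (s i - r - 1 + int i) else 0)" for i
  have vbl: "vb r lam i = s i" if "1 \<le> i" "i \<le> m" for i
    using f3[OF that] that unfolding vb_def lam_def by simp
  have part: "is_partition lam"
    unfolding is_partition_def
  proof (intro conjI allI impI)
    show "lam 0 = 0" unfolding lam_def by simp
    show "\<exists>N. \<forall>i\<ge>N. lam i = 0" by (rule exI[of _ "Suc m"]) (simp add: lam_def)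
    fix i :: nat assume i: "1 \<le> i"
    show "lam (Suc i) \<le> lam i"
    proof (cases "Suc i \<le> m")
      case True
      then show ?thesis using f1[of i "Suc i"] i f3[of i] f3[of "Suc i"] unfolding lam_def by simp
    next
      case False then show ?thesis unfolding lam_def by simp
    qed
  qed
  have "beta_set r lam = S"
  proof safe
    fix z assume "z \<in> beta_set r lam"
    then obtain i where i: "i \<ge> 1" "z = vb r lam i" unfolding beta_set_vb by auto
    show "z \<in> S"
    proof (cases "i \<le> m")
      case True then show ?thesis using vbl sT i unfolding T_def by auto
    next
      case False
      then have "z < N" using i mi unfolding vb_def lam_def by simp
      then show ?thesis using assms(1) by auto
    qed
  next
    fix z assume z: "z \<in> S"
    show "z \<in> beta_set r lam"
    proof (cases "z \<ge> N")
      case True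
      then have "z \<in> set xs" using z xs unfolding T_def by auto
      then obtain k where k: "k < m" "z = xs ! k" using xs(3) by (metis in_set_conv_nth)
      have "s (m - k) = z" unfolding s_def using k by simp
      then have "vb r lam (m - k) = z" using vbl[of "m - k"] k by simp
      then show ?thesis unfolding beta_set_vb using k by (intro image_eqI[of _ _ "m-k"]) auto
    next
      case False
      define i where "i = nat (r + 1 - z)"
      have "i > m" using False mi unfolding i_def by linarith
      then have "vb r lam i = z" unfolding vb_def lam_def i_def using False mi by simp
      then show ?thesis unfolding beta_set_vb using \<open>i > m\<close> by force
    qed
  qed
  then show ?thesis using part by blast
qed




lemma young_row: "1 \<le> a \<Longrightarrow> {b. (a, b) \<in> young lam} = {1..lam a}"
  unfolding young_def by auto

lemma int1_eq: "{1..m::nat} = {1..n} \<Longrightarrow> m = n"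
  using arg_cong[where f=card, of "{1..m}" "{1..n}"] by simp

lemma young_inj: assumes "is_partition lam" "is_partition mu" "young lam = young mu" shows "lam = mu"
proof
  fix a show "lam a = mu a"
  proof (cases "a = 0")
    case True then show ?thesis using assms unfolding is_partition_def by simp
  next
    case False
    have "{1..lam a} = {b. (a,b) \<in> young lam}" by (rule young_row[symmetric]) (use False in simp)
    also have "\<dots> = {b. (a,b) \<in> young mu}" using assms(3) by simp
    also have "\<dots> = {1..mu a}" by (rule young_row) (use False in simp)
    finally have "{1..lam a} = {1..mu a}" .
    then show ?thesis by (rule int1_eq)
  qed
qed

lemma young_finite: assumes "is_partition lam" shows "finite (young lam)"
proof -
  obtain K where K: "1 \<le> K" "\<forall>i\<ge>K. lam i = 0" using part_tail[OF assms] by blast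
  have "young lam \<subseteq> {1..K} \<times> {1..lam 1}"
  proof
    fix x assume "x \<in> young lam"
    then obtain a b where x: "x = (a, b)" "1 \<le> a" "1 \<le> b" "b \<le> lam a" unfolding young_def by auto
    have "a < K" proof (rule ccontr)
      assume "\<not> a < K" then have "lam a = 0" using K by simp
      then show False using x by simp
    qed
    moreover have "lam a \<le> lam 1" using part_mono[OF assms, of 1 a] x by simp
    ultimately show "x \<in> {1..K} \<times> {1..lam 1}" using x by auto
  qed
  then show ?thesis by (rule finite_subset) simp
qed

lemma remove_shape: assumes "is_partition lam" "is_partition mu" "x \<in> young lam" "young mu = young lam - {x}"
  shows "\<exists>a. 1 \<le> a \<and> 1 \<le> lam a \<and> x = (a, lam a) \<and> mu = lam(a := lam a - 1)"
proof -
  obtain a b where x: "x = (a, b)" "1 \<le> a" "1 \<le> b" "b \<le> lam a" using assms(3) unfolding young_def by auto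
  have rows: "mu a' = lam a'" if "a' \<noteq> a" for a'
  proof (cases "a' = 0")
    case True then show ?thesis using assms unfolding is_partition_def by simp
  next
    case False
    have "{1..mu a'} = {b. (a',b) \<in> young mu}" by (rule young_row[symmetric]) (use False in simp)
    also have "\<dots> = {b. (a', b) \<in> young lam}" unfolding assms(4) using x(1) that by blast
    also have "\<dots> = {1..lam a'}" by (rule young_row) (use False in simp)
    finally have "{1..mu a'} = {1..lam a'}" .
    then show ?thesis by (rule int1_eq)
  qed
  have ra: "{1..mu a} = {1..lam a} - {b}"
  proof -
    have "{1..mu a} = {b. (a,b) \<in> young mu}" by (rule young_row[symmetric]) (use x in simp)
    also have "\<dots> = {b. (a,b) \<in> young lam} - {b}" unfolding assms(4) using x(1) by blast
    also have "{b. (a,b) \<in> young lam} = {1..lam a}" by (rule young_row) (use x in simp)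
    finally show ?thesis .
  qed
  then have "card {1..mu a} = card ({1..lam a} - {b})" by simp
  also have "\<dots> = lam a - 1" using x by (simp add: card_Diff_singleton)
  finally have "mu a = lam a - 1" by simp
  have "b = lam a"
  proof (rule ccontr)
    assume "b \<noteq> lam a"
    then have "lam a \<in> {1..lam a} - {b}" using x by auto
    then have "lam a \<in> {1..mu a}" using ra by simp
    then show False using \<open>mu a = lam a - 1\<close> x by simp
  qed
  have "mu = lam(a := lam a - 1)" using rows \<open>mu a = lam a - 1\<close> by (intro ext) simp
  then show ?thesis using x \<open>b = lam a\<close> by blast
qed

lemma beta_remove: assumes "is_partition lam" "is_partition mu" "1 \<le> a" "1 \<le> lam a"
  "mu = lam(a := lam a - 1)"
  shows "vb 0 lam a \<in> beta_set 0 lam" "vb 0 lam a - 1 \<notin> beta_set 0 lam"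
    "beta_set 0 mu = insert (vb 0 lam a - 1) (beta_set 0 lam - {vb 0 lam a})"
proof -
  let ?v = "vb 0 lam a"
  show "?v \<in> beta_set 0 lam" using assms(3) unfolding beta_set_vb by auto
  have next_lt: "lam (Suc a) \<le> lam a - 1"
  proof -
    have "mu (Suc a) \<le> mu a" using assms(2,3) unfolding is_partition_def by auto
    then show ?thesis using assms(5) by simp
  qed
  show nin: "?v - 1 \<notin> beta_set 0 lam"
  proof
    assume "?v - 1 \<in> beta_set 0 lam"
    then obtain i where i: "i \<ge> 1" "?v - 1 = vb 0 lam i" unfolding beta_set_vb by auto
    consider "i < a" | "i = a" | "i > a" by linarith
    then show False
    proof cases
      case 1 then show ?thesis using vb_strict[OF assms(1) i(1) 1, of 0] i by simp
    next
      case 2 then show ?thesis using i by simp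
    next
      case 3
      have "vb 0 lam i \<le> vb 0 lam (Suc a)"
        using vb_strict[OF assms(1), of "Suc a" i 0] 3 by (cases "i = Suc a") auto
      then show ?thesis using next_lt i assms(4) unfolding vb_def by simp
    qed
  qed
  have vm: "vb 0 mu i = (if i = a then ?v - 1 else vb 0 lam i)" for i
    using assms(4,5) unfolding vb_def by auto
  have "beta_set 0 mu = vb 0 mu ` {1..}" by (rule beta_set_vb)
  also have "\<dots> = insert (?v - 1) (vb 0 lam ` ({1..} - {a}))"
    using assms(3) by (auto simp: vm image_iff)
  also have "vb 0 lam ` ({1..} - {a}) = vb 0 lam ` {1..} - {?v}"
    using vb_inj[OF assms(1), of 0] assms(3) by (auto simp: inj_on_def)
  finally show "beta_set 0 mu = insert (?v - 1) (beta_set 0 lam - {?v})" unfolding beta_set_vb .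
qed

lemma removable_node: assumes "is_partition lam" "1 \<le> a" "lam (Suc a) < lam a"
  shows "removable lam (a, lam a)"
proof -
  define mu where "mu = lam(a := lam a - 1)"
  have "is_partition mu"
    unfolding is_partition_def
  proof (intro conjI allI impI)
    show "mu 0 = 0" using assms(1,2) unfolding mu_def is_partition_def by simp
    obtain N where "\<forall>i\<ge>N. lam i = 0" using assms(1) unfolding is_partition_def by auto
    then show "\<exists>N. \<forall>i\<ge>N. mu i = 0" unfolding mu_def by (intro exI[of _ "max N (Suc a)"]) auto
    fix i :: nat assume "1 \<le> i"
    then have "lam (Suc i) \<le> lam i" using assms(1) unfolding is_partition_def by auto
    moreover have "lam a \<le> lam (a - 1)" if "a \<ge> 2" using part_mono[OF assms(1), of "a - 1" a] that by simp
    ultimately show "mu (Suc i) \<le> mu i" unfolding mu_def using assms(3)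
      by (cases "Suc i = a"; cases "i = a") auto
  qed
  moreover have "young mu = young lam - {(a, lam a)}"
  proof (rule set_eqI)
    fix y :: "nat \<times> nat"
    obtain p q where y: "y = (p, q)" by fastforce
    show "y \<in> young mu \<longleftrightarrow> y \<in> young lam - {(a, lam a)}"
      unfolding y by (cases "p = a") (auto simp: young_def mu_def)
  qed
  moreover have "(a, lam a) \<in> young lam" unfolding young_def using assms by auto
  ultimately show ?thesis unfolding removable_def by blast
qed

lemma terminal_closed: assumes "is_partition lam" "\<not> (\<exists>x. J_removable l J lam x)"
  "v \<in> beta_set 0 lam" "j \<in> J" "(v - 1) mod int l = int j mod int l"
  shows "v - 1 \<in> beta_set 0 lam"
proof (rule ccontr)
  assume nin: "v - 1 \<notin> beta_set 0 lam"
  obtain a where a: "a \<ge> 1" "v = vb 0 lam a" using assms(3) unfolding beta_set_vb by auto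
  have "lam (Suc a) \<le> lam a" using assms(1) a unfolding is_partition_def by auto
  moreover have "lam (Suc a) \<noteq> lam a"
  proof
    assume "lam (Suc a) = lam a"
    then have "vb 0 lam (Suc a) = v - 1" using a unfolding vb_def by simp
    moreover have "vb 0 lam (Suc a) \<in> beta_set 0 lam" unfolding beta_set_vb by simp
    ultimately show False using nin by simp
  qed
  ultimately have lt: "lam (Suc a) < lam a" by simp
  have "content (a, lam a) = v - 1" using a unfolding content_def vb_def by simp
  then have "J_removable l J lam (a, lam a)"
    unfolding J_removable_def using removable_node[OF assms(1) a(1) lt] assms(4,5) by auto
  then show False using assms(2) by blast
qed

lemma heart_exists: assumes "is_partition lam"
  shows "\<exists>nu. (remove_step l J)\<^sup>*\<^sup>* lam nu \<and> \<not> (\<exists>x. J_removable l J nu x)"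
  using assms
proof (induction "psize lam" arbitrary: lam rule: less_induct)
  case less
  show ?case
  proof (cases "\<exists>x. J_removable l J lam x")
    case False then show ?thesis by blast
  next
    case True
    then obtain x where x: "J_removable l J lam x" by blast
    then obtain mu where mu: "is_partition mu" "young mu = young lam - {x}" "x \<in> young lam"
      unfolding J_removable_def removable_def by blast
    have step: "remove_step l J lam mu" unfolding remove_step_def using less.prems mu x by blast
    have "psize mu < psize lam" unfolding psize_def mu(2)
      by (rule card_Diff1_less[OF young_finite[OF less.prems] mu(3)])
    then obtain nu where "(remove_step l J)\<^sup>*\<^sup>* mu nu \<and> \<not> (\<exists>x. J_removable l J nu x)"
      using less.hyps mu(1) by blast
    then show ?thesis using step by (meson converse_rtranclp_into_rtranclp)
  qed
qed




definition rn :: "nat \<Rightarrow> int set \<Rightarrow> nat \<Rightarrow> int set" where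
  "rn l B q = (if q < l then {c. int l * (c - 1) + int q + 1 \<in> B} else {})"

lemma dec_uniq: assumes "0 < l" "q < l" "q' < l" "int l * (c - 1) + int q + 1 = int l * (c' - 1) + int q' + 1"
  shows "q = q' \<and> c = c'"
proof -
  have m1: "(int l * (c - 1) + int q) mod int l = int q" using assms(2) by simp
  have m2: "(int l * (c' - 1) + int q') mod int l = int q'" using assms(3) by simp
  have "int l * (c - 1) + int q = int l * (c' - 1) + int q'" using assms(4) by simp
  then have "q = q'" using m1 m2 by simp
  then have "int l * (c - 1) = int l * (c' - 1)" using assms(4) by simp
  then show ?thesis using \<open>q = q'\<close> assms(1) by simp
qed

lemma dec_ex: assumes "0 < l"
  shows "y = int l * (((y - 1) div int l + 1) - 1) + int (nat ((y - 1) mod int l)) + 1"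
    "nat ((y - 1) mod int l) < l"
proof -
  have "(y - 1) mod int l \<ge> 0" using assms by simp
  then show "y = int l * (((y - 1) div int l + 1) - 1) + int (nat ((y - 1) mod int l)) + 1"
    by (simp add: mult.commute[of "int l"])
  have "(y - 1) mod int l < int l" using assms by simp
  then show "nat ((y - 1) mod int l) < l" using \<open>(y - 1) mod int l \<ge> 0\<close> by linarith
qed

lemma chi_rn: assumes "0 < l" shows "chi l (rn l B) = B"
proof (intro equalityI subsetI)
  fix y assume "y \<in> chi l (rn l B)"
  then obtain q c where "q < l" "c \<in> rn l B q" "y = int l * (c - 1) + int q + 1" unfolding chi_def by blast
  then show "y \<in> B" unfolding rn_def by simp
next
  fix y assume y: "y \<in> B"
  let ?q = "nat ((y - 1) mod int l)" and ?c = "(y - 1) div int l + 1"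
  have "?c \<in> rn l B ?q" using dec_ex[OF assms, of y] y unfolding rn_def by simp
  then show "y \<in> chi l (rn l B)" unfolding chi_def using dec_ex[OF assms, of y]
    by (intro CollectI exI[of _ ?q] exI[of _ ?c]) simp
qed

lemma rn_chi: assumes "0 < l" "q < l" shows "rn l (chi l C) q = C q"
proof (intro equalityI subsetI)
  fix c assume "c \<in> rn l (chi l C) q"
  then obtain q' c' where "q' < l" "c' \<in> C q'" "int l * (c - 1) + int q + 1 = int l * (c' - 1) + int q' + 1"
    unfolding rn_def chi_def using assms by auto
  then show "c \<in> C q" using dec_uniq[OF assms(1,2)] by blast
next
  fix c assume "c \<in> C q"
  then show "c \<in> rn l (chi l C) q" unfolding rn_def chi_def using assms by auto
qed

lemma move_pos: assumes "0 < l" "v \<in> B" "v - 1 \<notin> B" "B' = insert (v - 1) (B - {v})"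
  "q = nat ((v - 1) mod int l)" "c = (v - 1) div int l + 1" "q \<ge> 1"
  shows "c \<in> rn l B q" "c \<notin> rn l B (q - 1)" "q < l"
    "\<And>p x. p < l \<Longrightarrow> (x \<in> rn l B' p) = (if p = q \<and> x = c then False else if p = q - 1 \<and> x = c then True else x \<in> rn l B p)"
proof -
  have v: "v = int l * (c - 1) + int q + 1" "q < l"
    using dec_ex[OF assms(1), of v] unfolding assms(5)[symmetric] assms(6)[symmetric] by simp_all
  show "q < l" by (rule v(2))
  have v1: "v - 1 = int l * (c - 1) + int (q - 1) + 1" using v assms(7) by simp
  have "int l * (c - 1) + int q + 1 \<in> B" using assms(2) unfolding v(1)[symmetric] .
  then show "c \<in> rn l B q" using v(2) unfolding rn_def by simp
  have "int l * (c - 1) + int (q - 1) + 1 \<notin> B" using assms(3) unfolding v1[symmetric] .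
  then show "c \<notin> rn l B (q - 1)" unfolding rn_def using v(2) by simp
  fix p x assume p: "p < l"
  have e1: "(int l * (x - 1) + int p + 1 = v) = (p = q \<and> x = c)"
  proof
    assume "int l * (x - 1) + int p + 1 = v"
    then show "p = q \<and> x = c" using dec_uniq[OF assms(1) p v(2), of x c] unfolding v(1) by blast
  next
    assume "p = q \<and> x = c"
    then show "int l * (x - 1) + int p + 1 = v" unfolding v(1) by simp
  qed
  have e2: "(int l * (x - 1) + int p + 1 = v - 1) = (p = q - 1 \<and> x = c)"
  proof
    assume "int l * (x - 1) + int p + 1 = v - 1"
    moreover have "q - 1 < l" using v(2) by simp
    ultimately show "p = q - 1 \<and> x = c" using dec_uniq[OF assms(1) p, of "q - 1" x c] unfolding v1 by blast
  next
    assume "p = q - 1 \<and> x = c"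
    then show "int l * (x - 1) + int p + 1 = v - 1" unfolding v1 by simp
  qed
  have r1: "x \<in> rn l B' p \<longleftrightarrow> (int l * (x - 1) + int p + 1 = v - 1 \<or> (int l * (x - 1) + int p + 1 \<in> B \<and> int l * (x - 1) + int p + 1 \<noteq> v))"
    unfolding rn_def assms(4) using p by simp
  have r2: "x \<in> rn l B p \<longleftrightarrow> int l * (x - 1) + int p + 1 \<in> B" unfolding rn_def using p by simp
  show "(x \<in> rn l B' p) = (if p = q \<and> x = c then False else if p = q - 1 \<and> x = c then True else x \<in> rn l B p)"
    unfolding r1 r2 e1 e2 using assms(7) by auto
qed

lemma move_zero: assumes "0 < l" "v \<in> B" "v - 1 \<notin> B" "B' = insert (v - 1) (B - {v})"
  "0 = nat ((v - 1) mod int l)" "c = (v - 1) div int l + 1" "l \<ge> 2"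
  shows "c \<in> rn l B 0" "c - 1 \<notin> rn l B (l - 1)"
    "\<And>p x. p < l \<Longrightarrow> (x \<in> rn l B' p) = (if p = 0 \<and> x = c then False else if p = l - 1 \<and> x = c - 1 then True else x \<in> rn l B p)"
proof -
  have v: "v = int l * (c - 1) + int 0 + 1"
    using dec_ex[OF assms(1), of v] unfolding assms(5)[symmetric] assms(6)[symmetric] by simp
  have v1: "v - 1 = int l * (c - 1 - 1) + int (l - 1) + 1" using v assms(7) by (simp add: algebra_simps)
  have "int l * (c - 1) + int 0 + 1 \<in> B" using assms(2) unfolding v[symmetric] .
  then show "c \<in> rn l B 0" using assms(1) unfolding rn_def by simp
  have "int l * (c - 1 - 1) + int (l - 1) + 1 \<notin> B" using assms(3) unfolding v1[symmetric] .
  then show "c - 1 \<notin> rn l B (l - 1)" using assms(1) unfolding rn_def by simp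
  fix p x assume p: "p < l"
  have e1: "(int l * (x - 1) + int p + 1 = v) = (p = 0 \<and> x = c)"
  proof
    assume "int l * (x - 1) + int p + 1 = v"
    then show "p = 0 \<and> x = c" using dec_uniq[OF assms(1) p assms(1), of x c] unfolding v by simp
  next
    assume "p = 0 \<and> x = c"
    then show "int l * (x - 1) + int p + 1 = v" unfolding v by simp
  qed
  have e2: "(int l * (x - 1) + int p + 1 = v - 1) = (p = l - 1 \<and> x = c - 1)"
  proof
    assume "int l * (x - 1) + int p + 1 = v - 1"
    moreover have "l - 1 < l" using assms(1) by simp
    ultimately show "p = l - 1 \<and> x = c - 1" using dec_uniq[OF assms(1) p, of "l - 1" x "c - 1"] unfolding v1 by blast
  next
    assume "p = l - 1 \<and> x = c - 1"
    then show "int l * (x - 1) + int p + 1 = v - 1" unfolding v1 by simp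
  qed
  have r1: "x \<in> rn l B' p \<longleftrightarrow> (int l * (x - 1) + int p + 1 = v - 1 \<or> (int l * (x - 1) + int p + 1 \<in> B \<and> int l * (x - 1) + int p + 1 \<noteq> v))"
    unfolding rn_def assms(4) using p by simp
  have r2: "x \<in> rn l B p \<longleftrightarrow> int l * (x - 1) + int p + 1 \<in> B" unfolding rn_def using p by simp
  show "(x \<in> rn l B' p) = (if p = 0 \<and> x = c then False else if p = l - 1 \<and> x = c - 1 then True else x \<in> rn l B p)"
    unfolding r1 r2 e1 e2 using assms(7) by auto
qed

lemma card_swap: assumes "finite I" "a \<noteq> b" "a \<in> I \<longleftrightarrow> b \<in> I" "P a" "\<not> P b" "\<not> P' a" "P' b"
  "\<And>p. p \<in> I \<Longrightarrow> p \<noteq> a \<Longrightarrow> p \<noteq> b \<Longrightarrow> P' p = P p"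
  shows "card {p \<in> I. P' p} = card {p \<in> I. P p}"
proof (cases "a \<in> I")
  case False
  have "{p \<in> I. P' p} = {p \<in> I. P p}"
  proof (rule set_eqI)
    fix p show "p \<in> {p \<in> I. P' p} \<longleftrightarrow> p \<in> {p \<in> I. P p}"
      using assms(3) assms(8)[of p] False by (cases "p = a"; cases "p = b") auto
  qed
  then show ?thesis by simp
next
  case True
  have "{p \<in> I. P' p} = insert b ({p \<in> I. P p} - {a})"
  proof (rule set_eqI)
    fix p show "p \<in> {p \<in> I. P' p} \<longleftrightarrow> p \<in> insert b ({p \<in> I. P p} - {a})"
      using assms(2-7) assms(8)[of p] True by (cases "p = a"; cases "p = b") auto
  qed
  moreover have "b \<notin> {p \<in> I. P p} - {a}" using assms(5) by simp
  moreover have "a \<in> {p \<in> I. P p}" using True assms(4) by simp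
  moreover have "card {p \<in> I. P p} > 0" using True assms(1,4) by (auto simp: card_gt_0_iff)
  ultimately show ?thesis using assms(1) by (simp add: card_Diff_singleton)
qed

lemma card_lose: assumes "finite I" "a \<in> I" "P a" "\<not> P' a" "\<And>p. p \<in> I \<Longrightarrow> p \<noteq> a \<Longrightarrow> P' p = P p"
  shows "card {p \<in> I. P' p} + 1 = card {p \<in> I. P p}"
proof -
  have "{p \<in> I. P' p} = {p \<in> I. P p} - {a}"
  proof (rule set_eqI)
    fix p show "p \<in> {p \<in> I. P' p} \<longleftrightarrow> p \<in> {p \<in> I. P p} - {a}"
      using assms(2-4) assms(5)[of p] by (cases "p = a") auto
  qed
  moreover have "a \<in> {p \<in> I. P p}" using assms by simp
  moreover have "finite {p \<in> I. P p}" using assms(1) by simp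
  moreover have "card {p \<in> I. P p} > 0" using assms(1,2,3) by (auto simp: card_gt_0_iff)
  ultimately show ?thesis by (simp add: card_Diff_singleton)
qed

lemma card_same: assumes "\<And>p. p \<in> I \<Longrightarrow> P' p = P p" shows "card {p \<in> I. P' p} = card {p \<in> I. P p}"
proof -
  have "{p \<in> I. P' p} = {p \<in> I. P p}" using assms by auto
  then show ?thesis by simp
qed




lemma perm_word_append: "perm_word (ws @ vs) = perm_word ws \<circ> perm_word vs"
  unfolding perm_word_def by (induction ws) auto

lemma perm_word_single: "perm_word [i] = Transposition.transpose (i - 1) i"
  unfolding perm_word_def by simp

definition Gw :: "nat \<Rightarrow> (nat \<Rightarrow> nat) set" where
  "Gw l = {f. \<exists>ws. set ws \<subseteq> {1..<l} \<and> perm_word ws = f}"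

lemma Gw_comp: assumes "f \<in> Gw l" "g \<in> Gw l" shows "f \<circ> g \<in> Gw l"
proof -
  obtain ws vs where "set ws \<subseteq> {1..<l}" "perm_word ws = f" "set vs \<subseteq> {1..<l}" "perm_word vs = g"
    using assms unfolding Gw_def by blast
  then show ?thesis unfolding Gw_def by (intro CollectI exI[of _ "ws @ vs"]) (simp add: perm_word_append)
qed

lemma Gw_trans_adj: "1 \<le> i \<Longrightarrow> i < l \<Longrightarrow> Transposition.transpose (i - 1) i \<in> Gw l"
  unfolding Gw_def by (intro CollectI exI[of _ "[i]"]) (simp add: perm_word_single)

lemma transpose_conj: "a < b \<Longrightarrow> Transposition.transpose a (Suc b)
   = Transposition.transpose b (Suc b) \<circ> Transposition.transpose a b \<circ> Transposition.transpose b (Suc b)"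
  by (rule ext) (simp add: Transposition.transpose_def)

lemma Gw_trans_lt: assumes "a < b" "b < l" shows "Transposition.transpose a b \<in> Gw l"
  using assms
proof (induction b)
  case 0 then show ?case by simp
next
  case (Suc b)
  show ?case
  proof (cases "a = b")
    case True then show ?thesis using Gw_trans_adj[of "Suc b" l] Suc.prems by simp
  next
    case False
    then have "a < b" using Suc.prems by simp
    have t1: "Transposition.transpose b (Suc b) \<in> Gw l" using Gw_trans_adj[of "Suc b" l] Suc.prems by simp
    have "Transposition.transpose a b \<in> Gw l" using Suc.IH \<open>a < b\<close> Suc.prems by simp
    then show ?thesis unfolding transpose_conj[OF \<open>a < b\<close>] using t1 by (intro Gw_comp)
  qed
qed

lemma Gw_trans: assumes "a \<noteq> b" "a < l" "b < l" shows "Transposition.transpose a b \<in> Gw l"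
proof (cases "a < b")
  case True then show ?thesis using Gw_trans_lt assms by simp
next
  case False
  then have "b < a" using assms by simp
  then show ?thesis using Gw_trans_lt[of b a l] assms by (simp add: transpose_commute)
qed

lemma word_exists: assumes "w permutes {..<l}" shows "\<exists>ws. set ws \<subseteq> {1..<l} \<and> perm_word ws = w"
proof -
  have "w \<in> Gw l"
    using assms finite_lessThan[of l]
  proof (induction rule: permutes_induct)
    case id
    then show ?case unfolding Gw_def by (intro CollectI exI[of _ "[]"]) (simp add: perm_word_def id_def)
  next
    case (swap a b p)
    show ?case by (rule Gw_comp[OF Gw_trans]) (use swap in auto)
  qed
  then show ?thesis unfolding Gw_def by simp
qed

lemma alpha_sum: assumes "0 < l" shows "(\<Sum>j<l. alpha l i j) = 0"
proof -
  have s: "(\<Sum>j<l. (if j = k then c else 0)) = (c::int)" if "k < l" for k c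
    using that by (simp add: sum.delta)
  have "(\<Sum>j<l. alpha l i j) = (\<Sum>j<l. (if j = i mod l then 2 else 0)) - (\<Sum>j<l. (if j = (i + l - 1) mod l then 1 else 0))
     - (\<Sum>j<l. (if j = (i + 1) mod l then 1 else 0))"
    unfolding alpha_def by (simp add: sum_subtractf)
  also have "\<dots> = 0" using assms by (simp only: s mod_less_divisor)
  finally show ?thesis .
qed

lemma s_act_props: assumes "0 < l" "i < l" "\<forall>k<l. of_nat d * th k \<in> \<int>"
  shows "\<forall>k<l. of_nat d * s_act l i th k \<in> \<int>" "(\<Sum>k<l. s_act l i th k) = (\<Sum>k<l. th k)"
proof -
  show "\<forall>k<l. of_nat d * s_act l i th k \<in> \<int>"
  proof (intro allI impI)
    fix k assume "k < l"
    have "of_nat d * s_act l i th k = of_nat d * th k - (of_nat d * th i) * of_int (alpha l i k)"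
      unfolding s_act_def by (simp add: algebra_simps)
    then show "of_nat d * s_act l i th k \<in> \<int>" using assms(2,3) \<open>k < l\<close> by simp
  qed
  have "(\<Sum>k<l. s_act l i th k) = (\<Sum>k<l. th k) - th i * of_int (\<Sum>k<l. alpha l i k)"
    unfolding s_act_def by (simp add: sum_subtractf sum_distrib_left)
  then show "(\<Sum>k<l. s_act l i th k) = (\<Sum>k<l. th k)" using alpha_sum[OF assms(1)] by simp
qed

lemma act_word_props: assumes "0 < l" "set ws \<subseteq> {1..<l}" "\<forall>k<l. of_nat d * th k \<in> \<int>"
  shows "(\<forall>k<l. of_nat d * act_word l ws th k \<in> \<int>) \<and> (\<Sum>k<l. act_word l ws th k) = (\<Sum>k<l. th k)"
  using assms(2)
proof (induction ws)
  case Nil then show ?case using assms(3) unfolding act_word_def by simp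
next
  case (Cons i ws)
  then have i: "i < l" and ih: "(\<forall>k<l. of_nat d * act_word l ws th k \<in> \<int>) \<and> (\<Sum>k<l. act_word l ws th k) = (\<Sum>k<l. th k)"
    by auto
  have eq: "act_word l (i # ws) th = s_act l i (act_word l ws th)" unfolding act_word_def by simp
  show ?case unfolding eq using s_act_props[OF assms(1) i, of d "act_word l ws th"] ih by simp
qed

lemma theta_sum: assumes "0 < l" shows "(\<Sum>k<l. theta l H k) = 1"
proof -
  have "{..<l} = insert 0 {1..<l}" using assms by auto
  then have "(\<Sum>k<l. theta l H k) = theta l H 0 + (\<Sum>k\<in>{1..<l}. theta l H k)" by simp
  also have "(\<Sum>k\<in>{1..<l}. theta l H k) = (\<Sum>k\<in>{1..<l}. H k)" unfolding theta_def by (rule sum.cong) auto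
  finally show ?thesis unfolding theta_def by simp
qed

lemma shift_mod: assumes "(j::nat) < l" shows "(j + l - 1) mod l = (if j = 0 then l - 1 else j - 1)"
proof (cases "j = 0")
  case True
  have "l - 1 < l" using assms by (cases l) auto
  then show ?thesis using True by simp
next
  case False
  then have e: "j + l - 1 = (j - 1) + l" by simp
  have "((j - 1) + l) mod l = (j - 1) mod l" by simp
  also have "\<dots> = j - 1" using assms by simp
  finally show ?thesis using False e by simp
qed

lemma phi_sum: assumes "0 < l" shows "(\<Sum>j<l. phi l r j) = 0"
proof -
  have b: "bij_betw (\<lambda>j. (j + l - 1) mod l) {..<l} {..<l}"
  proof (rule bij_betw_imageI)
    show "inj_on (\<lambda>j. (j + l - 1) mod l) {..<l}"
    proof (rule inj_onI)
      fix x y assume xy: "x \<in> {..<l}" "y \<in> {..<l}" "(x + l - 1) mod l = (y + l - 1) mod l"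
      then show "x = y" using shift_mod[of x l] shift_mod[of y l] by (auto split: if_splits)
    qed
    show "(\<lambda>j. (j + l - 1) mod l) ` {..<l} = {..<l}"
    proof
      show "(\<lambda>j. (j + l - 1) mod l) ` {..<l} \<subseteq> {..<l}" using assms by auto
      show "{..<l} \<subseteq> (\<lambda>j. (j + l - 1) mod l) ` {..<l}"
      proof
        fix y assume y: "y \<in> {..<l}"
        show "y \<in> (\<lambda>j. (j + l - 1) mod l) ` {..<l}"
        proof (cases "y = l - 1")
          case True
          then show ?thesis using shift_mod[of 0 l] assms by (intro image_eqI[of _ _ 0]) auto
        next
          case False
          then have "y + 1 < l" using y by auto
          then show ?thesis using shift_mod[of "y + 1" l] by (intro image_eqI[of _ _ "y + 1"]) auto
        qed
      qed
    qed
  qed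
  have "(\<Sum>j<l. r ((j + l - 1) mod l)) = (\<Sum>j<l. r j)" using sum.reindex_bij_betw[OF b, of r] .
  then show ?thesis unfolding phi_def by (simp add: sum_subtractf)
qed




lemma eps_props: assumes "0 < l" "\<forall>i\<in>{1..<l}. of_nat d * H i \<in> \<int>" "w permutes {..<l}"
  shows "\<forall>k<l. of_nat d * eps l H r w k \<in> \<int>" "(\<Sum>k<l. eps l H r w k) = 1"
proof -
  define ws0 where "ws0 = (SOME ws. set ws \<subseteq> {1..<l} \<and> perm_word ws = w)"
  have ws0: "set ws0 \<subseteq> {1..<l}" using someI_ex[OF word_exists[OF assms(3)]] unfolding ws0_def by blast
  have sl: "Sl_act l w (theta l H) = act_word l ws0 (theta l H)" unfolding Sl_act_def ws0_def ..
  have th: "\<forall>k<l. of_nat d * theta l H k \<in> \<int>"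
  proof (intro allI impI)
    fix k assume k: "k < l"
    show "of_nat d * theta l H k \<in> \<int>"
    proof (cases "k = 0")
      case True
      have "of_nat d * theta l H k = of_nat d - (\<Sum>j\<in>{1..<l}. of_nat d * H j)"
        unfolding theta_def using True by (simp add: algebra_simps sum_distrib_left)
      moreover have "(\<Sum>j\<in>{1..<l}. of_nat d * H j) \<in> \<int>" using assms(2) by (intro Ints_sum) auto
      ultimately show ?thesis by simp
    next
      case False
      then show ?thesis using assms(2) k unfolding theta_def by simp
    qed
  qed
  have aw: "(\<forall>k<l. of_nat d * act_word l ws0 (theta l H) k \<in> \<int>) \<and> (\<Sum>k<l. act_word l ws0 (theta l H) k) = (\<Sum>k<l. theta l H k)"
    by (rule act_word_props[OF assms(1) ws0 th])
  show "\<forall>k<l. of_nat d * eps l H r w k \<in> \<int>"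
  proof (intro allI impI)
    fix k assume "k < l"
    have "of_nat d * eps l H r w k = of_nat d * act_word l ws0 (theta l H) k + of_int (int d * phi l r k)"
      unfolding eps_def sl by (simp add: algebra_simps)
    then show "of_nat d * eps l H r w k \<in> \<int>" using aw \<open>k < l\<close> by simp
  qed
  have "(\<Sum>k<l. eps l H r w k) = (\<Sum>k<l. act_word l ws0 (theta l H) k) + of_int (\<Sum>k<l. phi l r k)"
    unfolding eps_def sl by (simp add: sum.distrib)
  then show "(\<Sum>k<l. eps l H r w k) = 1" using aw theta_sum[OF assms(1)] phi_sum[OF assms(1)] by simp
qed

definition Mf :: "nat \<Rightarrow> (nat \<Rightarrow> rat) \<Rightarrow> nat \<Rightarrow> rat" where
  "Mf d e p = (\<Sum>k\<le>p. of_nat d * e k)"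

locale epsl =
  fixes l d :: nat and e :: "nat \<Rightarrow> rat"
  assumes l0: "0 < l" and d0: "0 < d" and nonneg: "\<And>k. k < l \<Longrightarrow> 0 \<le> e k"
    and integ: "\<And>k. k < l \<Longrightarrow> of_nat d * e k \<in> \<int>" and esum: "(\<Sum>k<l. e k) = 1"
begin

abbreviation "M \<equiv> Mf d e"

lemma M_step: "M (Suc p) = M p + of_nat d * e (Suc p)"
  unfolding Mf_def by simp

lemma M_0: "M 0 = of_nat d * e 0" unfolding Mf_def by simp

lemma M_mono: assumes "p \<le> p'" "p' < l" shows "M p \<le> M p'"
  using assms
proof (induction p' rule: dec_induct)
  case base then show ?case by simp
next
  case (step k)
  have "0 \<le> e (Suc k)" using nonneg step by simp
  then have "0 \<le> of_nat d * e (Suc k)" by simp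
  then show ?case using step M_step[of k] by linarith
qed

lemma M_nonneg: assumes "p < l" shows "0 \<le> M p"
proof -
  have "0 \<le> of_nat d * e 0" using nonneg[of 0] l0 by simp
  then show ?thesis using M_mono[of 0 p] M_0 assms by simp
qed

lemma M_last: "M (l - 1) = of_nat d"
proof -
  have "{..l - 1} = {..<l}" using l0 by auto
  then show ?thesis unfolding Mf_def using esum by (simp add: sum_distrib_left[symmetric])
qed

lemma M_nat: assumes "p < l" shows "\<exists>t. t \<le> d \<and> M p = of_nat t"
proof -
  have "M p \<in> \<int>" unfolding Mf_def using integ assms by (intro Ints_sum) auto
  then obtain z where z: "M p = of_int z" by (auto elim: Ints_cases)
  have "0 \<le> z" using M_nonneg[OF assms] z by simp
  have "M p \<le> of_nat d" using M_mono[of p "l - 1"] assms M_last by simp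
  then have "z \<le> int d" using z by (metis of_int_le_iff of_int_of_nat_eq)
  show ?thesis using z \<open>0 \<le> z\<close> \<open>z \<le> int d\<close> by (intro exI[of _ "nat z"]) auto
qed

lemma Iset_sub: "Iset l d e t \<subseteq> {..<l}" unfolding Iset_def by auto

lemma Iset_mem: "p \<in> Iset l d e t \<longleftrightarrow> p < l \<and> M p = of_nat t"
  unfolding Iset_def Mf_def by simp

lemma finite_Iset: "finite (Iset l d e t)" using Iset_sub finite_subset by blast

lemma Jset_mem: "p \<in> Jset l e \<longleftrightarrow> p < l \<and> e p = 0" unfolding Jset_def by simp

lemma J_step: assumes "1 \<le> p" "p < l" shows "p \<in> Jset l e \<longleftrightarrow> M p = M (p - 1)"
proof -
  have "M p = M (p - 1) + of_nat d * e p" using M_step[of "p - 1"] assms by simp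
  then show ?thesis using d0 assms unfolding Jset_mem by simp
qed

lemma J_zero: "0 \<in> Jset l e \<longleftrightarrow> 0 \<in> Iset l d e 0"
  using d0 l0 unfolding Jset_mem Iset_mem M_0 by simp

lemma last_in_d: "l - 1 \<in> Iset l d e d" using M_last l0 unfolding Iset_mem by simp

lemma zero_J_l2: "0 \<in> Jset l e \<Longrightarrow> 2 \<le> l"
proof (rule ccontr)
  assume "0 \<in> Jset l e" "\<not> 2 \<le> l"
  then have "l = 1" using l0 by simp
  then show False using esum \<open>0 \<in> Jset l e\<close> unfolding Jset_mem by simp
qed

lemma Iset_disj: "t \<noteq> t' \<Longrightarrow> p \<in> Iset l d e t \<Longrightarrow> p \<notin> Iset l d e t'"
  unfolding Iset_mem by auto

lemma between_J: assumes "p' \<in> Iset l d e t" "p \<in> Iset l d e t" "p' < k" "k \<le> p"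
  shows "k \<in> Jset l e" "k \<in> Iset l d e t"
proof -
  have pl: "p < l" using assms(2) unfolding Iset_mem by simp
  have "M p' \<le> M (k - 1)" using M_mono[of p' "k - 1"] assms pl by simp
  moreover have "M (k - 1) \<le> M k" using M_mono[of "k - 1" k] assms pl by simp
  moreover have "M k \<le> M p" using M_mono[of k p] assms pl by simp
  moreover have "M p' = M p" using assms(1,2) unfolding Iset_mem by simp
  ultimately have "M k = M (k - 1)" "M k = of_nat t" using assms(2) unfolding Iset_mem by auto
  then show "k \<in> Jset l e" "k \<in> Iset l d e t" using J_step[of k] assms pl unfolding Iset_mem by auto
qed

end




lemma downsets_sub: fixes pos :: "'a \<Rightarrow> nat" assumes "finite I" "inj_on pos I" "S1 \<subseteq> I" "S2 \<subseteq> I"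
  "\<And>p p'. p \<in> S1 \<Longrightarrow> p' \<in> I \<Longrightarrow> pos p' < pos p \<Longrightarrow> p' \<in> S1"
  "\<And>p p'. p \<in> S2 \<Longrightarrow> p' \<in> I \<Longrightarrow> pos p' < pos p \<Longrightarrow> p' \<in> S2"
  "card S1 = card S2"
  shows "S1 \<subseteq> S2"
proof (rule ccontr)
  assume "\<not> S1 \<subseteq> S2"
  then obtain p where p: "p \<in> S1" "p \<notin> S2" by blast
  have "S2 \<subseteq> S1 - {p}"
  proof
    fix q assume q: "q \<in> S2"
    have "pos q < pos p"
    proof (rule ccontr)
      assume "\<not> pos q < pos p"
      then consider "pos p < pos q" | "pos p = pos q" by linarith
      then show False
      proof cases
        case 1 then show ?thesis using assms(6)[OF q _ 1] p assms(3) by blast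
      next
        case 2 then have "p = q" using assms(2,3,4) p q by (meson inj_on_def subsetD)
        then show ?thesis using p q by simp
      qed
    qed
    then show "q \<in> S1 - {p}" using assms(5)[OF p(1), of q] q assms(4) by auto
  qed
  moreover have "finite S1" using assms(1,3) finite_subset by blast
  ultimately have "card S2 \<le> card (S1 - {p})" by (simp add: card_mono)
  also have "\<dots> < card S1" by (rule card_Diff1_less[OF \<open>finite S1\<close> p(1)])
  finally show False using assms(7) by simp
qed

lemma block_unique: fixes pos :: "'a \<Rightarrow> nat" assumes "finite I" "inj_on pos I"
  "\<And>p p'. p \<in> I \<Longrightarrow> p' \<in> I \<Longrightarrow> pos p' < pos p \<Longrightarrow> E1 p \<subseteq> E1 p'"
  "\<And>p p'. p \<in> I \<Longrightarrow> p' \<in> I \<Longrightarrow> pos p' < pos p \<Longrightarrow> E2 p \<subseteq> E2 p'"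
  "\<And>x. card {p \<in> I. x \<in> E1 p} = card {p \<in> I. x \<in> E2 p}"
  "p \<in> I"
  shows "E1 p = E2 p"
proof (rule set_eqI)
  fix x
  have d1: "\<And>p p'. p \<in> {p \<in> I. x \<in> E1 p} \<Longrightarrow> p' \<in> I \<Longrightarrow> pos p' < pos p \<Longrightarrow> p' \<in> {p \<in> I. x \<in> E1 p}"
    using assms(3) by blast
  have d2: "\<And>p p'. p \<in> {p \<in> I. x \<in> E2 p} \<Longrightarrow> p' \<in> I \<Longrightarrow> pos p' < pos p \<Longrightarrow> p' \<in> {p \<in> I. x \<in> E2 p}"
    using assms(4) by blast
  have "{p \<in> I. x \<in> E1 p} \<subseteq> {p \<in> I. x \<in> E2 p}"
    by (rule downsets_sub[OF assms(1,2) _ _ d1 d2 assms(5)]) auto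
  moreover have "{p \<in> I. x \<in> E2 p} \<subseteq> {p \<in> I. x \<in> E1 p}"
    by (rule downsets_sub[OF assms(1,2) _ _ d2 d1 assms(5)[symmetric]]) auto
  ultimately show "x \<in> E1 p \<longleftrightarrow> x \<in> E2 p" using assms(6) by blast
qed

lemma chain_sub: fixes F :: "nat \<Rightarrow> 'b set" assumes "\<And>k. p' < k \<Longrightarrow> k \<le> p \<Longrightarrow> F k \<subseteq> F (k - 1)" "p' \<le> p"
  shows "F p \<subseteq> F p'"
  using assms(2,1)
proof (induction p rule: dec_induct)
  case base then show ?case by simp
next
  case (step k)
  have "F (Suc k) \<subseteq> F k" using step.prems[of "Suc k"] step.hyps by simp
  then show ?case using step by auto
qed

context epsl
begin

definition chainc :: "(nat \<Rightarrow> int set) \<Rightarrow> bool" where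
  "chainc Ct \<longleftrightarrow> (\<forall>p\<in>Jset l e. p \<noteq> 0 \<longrightarrow> Ct p \<subseteq> Ct (p - 1)) \<and>
      (0 \<in> Iset l d e 0 \<longrightarrow> {x. x + 1 \<in> Ct 0} \<subseteq> Ct (l - 1))"

lemma block_nested: assumes "chainc Ct" "p' \<in> Iset l d e t" "p \<in> Iset l d e t" "p' \<le> p"
  shows "Ct p \<subseteq> Ct p'"
proof (rule chain_sub[OF _ assms(4)])
  fix k assume k: "p' < k" "k \<le> p"
  then have "k \<in> Jset l e" using between_J[OF assms(2,3)] by simp
  then show "Ct k \<subseteq> Ct (k - 1)" using assms(1) k unfolding chainc_def by auto
qed

lemma Cbr_mid: "1 \<le> t \<Longrightarrow> t \<le> d - 1 \<Longrightarrow> Cbr l d e C t x = card {p \<in> Iset l d e t. x \<in> C p}"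
  unfolding Cbr_def by simp

definition E0 :: "(nat \<Rightarrow> int set) \<Rightarrow> nat \<Rightarrow> int set" where
  "E0 Ct p = (if p \<in> Iset l d e 0 then {x. x + 1 \<in> Ct p} else Ct p)"

definition pos0 :: "nat \<Rightarrow> nat" where
  "pos0 p = (if p \<in> Iset l d e 0 then p + l else p)"

lemma Cbr_0: "Cbr l d e C 0 x = card {p \<in> Iset l d e 0 \<union> Iset l d e d. x \<in> E0 C p}"
proof -
  have disj: "Iset l d e 0 \<inter> Iset l d e d = {}" using Iset_disj[of 0 d] d0 by auto
  have "{p \<in> Iset l d e 0 \<union> Iset l d e d. x \<in> E0 C p}
        = {p \<in> Iset l d e 0. x + 1 \<in> C p} \<union> {p \<in> Iset l d e d. x \<in> C p}"
    unfolding E0_def using disj by auto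
  moreover have "{p \<in> Iset l d e 0. x + 1 \<in> C p} \<inter> {p \<in> Iset l d e d. x \<in> C p} = {}" using disj by auto
  ultimately have "card {p \<in> Iset l d e 0 \<union> Iset l d e d. x \<in> E0 C p}
      = card {p \<in> Iset l d e 0. x + 1 \<in> C p} + card {p \<in> Iset l d e d. x \<in> C p}"
    using finite_Iset by (simp add: card_Un_disjoint)
  then show ?thesis unfolding Cbr_def by simp
qed

lemma E0_nested: assumes "chainc Ct" "p \<in> Iset l d e 0 \<union> Iset l d e d" "p' \<in> Iset l d e 0 \<union> Iset l d e d"
  "pos0 p' < pos0 p" shows "E0 Ct p \<subseteq> E0 Ct p'"
proof -
  have disj: "\<And>q. q \<in> Iset l d e 0 \<Longrightarrow> q \<notin> Iset l d e d" using Iset_disj[of 0 d] d0 by auto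
  have lt: "\<And>q. q \<in> Iset l d e t \<Longrightarrow> q < l" for t using Iset_sub by auto
  consider "p \<in> Iset l d e 0" "p' \<in> Iset l d e 0" | "p \<in> Iset l d e d" "p' \<in> Iset l d e d"
    | "p \<in> Iset l d e 0" "p' \<in> Iset l d e d" | "p \<in> Iset l d e d" "p' \<in> Iset l d e 0"
    using assms(2,3) by blast
  then show ?thesis
  proof cases
    case 1
    then have "p' < p" using assms(4) unfolding pos0_def by simp
    then have "Ct p \<subseteq> Ct p'" using block_nested[OF assms(1) 1(2,1)] by simp
    then show ?thesis using 1 unfolding E0_def by auto
  next
    case 2
    have "p \<notin> Iset l d e 0" "p' \<notin> Iset l d e 0" using disj 2 by blast+
    then have "p' < p" using assms(4) unfolding pos0_def by simp
    then have "Ct p \<subseteq> Ct p'" using block_nested[OF assms(1) 2(2,1)] by simp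
    then show ?thesis using 2 disj unfolding E0_def by auto
  next
    case 3
    have "M 0 \<le> M p" using M_mono[of 0 p] lt[OF 3(1)] by simp
    then have z: "0 \<in> Iset l d e 0" using 3(1) M_nonneg[of 0] l0 unfolding Iset_mem by simp
    have "Ct p \<subseteq> Ct 0" using block_nested[OF assms(1) z 3(1)] by simp
    moreover have "{x. x + 1 \<in> Ct 0} \<subseteq> Ct (l - 1)" using assms(1) z unfolding chainc_def by blast
    moreover have "Ct (l - 1) \<subseteq> Ct p'" using block_nested[OF assms(1) 3(2) last_in_d] lt[OF 3(2)] by simp
    ultimately show ?thesis using 3 disj unfolding E0_def by auto
  next
    case 4
    have "p \<notin> Iset l d e 0" using disj 4 by blast
    then have False using assms(4) 4 lt[OF 4(1)] unfolding pos0_def by simp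
    then show ?thesis ..
  qed
qed

lemma pos0_inj: "inj_on pos0 (Iset l d e 0 \<union> Iset l d e d)"
proof (rule inj_onI)
  fix p q assume pq: "p \<in> Iset l d e 0 \<union> Iset l d e d" "q \<in> Iset l d e 0 \<union> Iset l d e d" "pos0 p = pos0 q"
  have "p < l" "q < l" using pq Iset_sub by auto
  then show "p = q" using pq(3) unfolding pos0_def by (auto split: if_splits)
qed

lemma unique: assumes "chainc Ct1" "chainc Ct2" "\<And>t. t \<le> d \<Longrightarrow> Cbr l d e Ct1 t = Cbr l d e Ct2 t"
  "q < l" shows "Ct1 q = Ct2 q"
proof -
  obtain t where t: "t \<le> d" "M q = of_nat t" using M_nat[OF assms(4)] by blast
  then have qI: "q \<in> Iset l d e t" using assms(4) unfolding Iset_mem by simp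
  show ?thesis
  proof (cases "t = 0 \<or> t = d")
    case False
    then have t1: "1 \<le> t" "t \<le> d - 1" using t by auto
    show ?thesis
    proof (rule block_unique[of "Iset l d e t" id])
      show "finite (Iset l d e t)" by (rule finite_Iset)
      show "inj_on id (Iset l d e t)" by simp
      show "\<And>p p'. p \<in> Iset l d e t \<Longrightarrow> p' \<in> Iset l d e t \<Longrightarrow> id p' < id p \<Longrightarrow> Ct1 p \<subseteq> Ct1 p'"
        using block_nested[OF assms(1)] by simp
      show "\<And>p p'. p \<in> Iset l d e t \<Longrightarrow> p' \<in> Iset l d e t \<Longrightarrow> id p' < id p \<Longrightarrow> Ct2 p \<subseteq> Ct2 p'"
        using block_nested[OF assms(2)] by simp
      show "\<And>x. card {p \<in> Iset l d e t. x \<in> Ct1 p} = card {p \<in> Iset l d e t. x \<in> Ct2 p}"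
        using assms(3)[OF t(1)] Cbr_mid[OF t1] by metis
      show "q \<in> Iset l d e t" by (rule qI)
    qed
  next
    case True
    let ?I = "Iset l d e 0 \<union> Iset l d e d"
    have qI': "q \<in> ?I" using True qI by auto
    have "E0 Ct1 q = E0 Ct2 q"
    proof (rule block_unique[of ?I pos0])
      show "finite ?I" using finite_Iset by simp
      show "inj_on pos0 ?I" by (rule pos0_inj)
      show "\<And>p p'. p \<in> ?I \<Longrightarrow> p' \<in> ?I \<Longrightarrow> pos0 p' < pos0 p \<Longrightarrow> E0 Ct1 p \<subseteq> E0 Ct1 p'"
        using E0_nested[OF assms(1)] by blast
      show "\<And>p p'. p \<in> ?I \<Longrightarrow> p' \<in> ?I \<Longrightarrow> pos0 p' < pos0 p \<Longrightarrow> E0 Ct2 p \<subseteq> E0 Ct2 p'"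
        using E0_nested[OF assms(2)] by blast
      show "\<And>x. card {p \<in> ?I. x \<in> E0 Ct1 p} = card {p \<in> ?I. x \<in> E0 Ct2 p}"
        using assms(3)[of 0] Cbr_0 by (metis zero_le)
      show "q \<in> ?I" by (rule qI')
    qed
    then show ?thesis
    proof (cases "q \<in> Iset l d e 0")
      case True
      then have h: "{x. x + 1 \<in> Ct1 q} = {x. x + 1 \<in> Ct2 q}" using \<open>E0 Ct1 q = E0 Ct2 q\<close> unfolding E0_def by simp
      show ?thesis
      proof (rule set_eqI)
        fix y
        have "y - 1 \<in> {x. x + 1 \<in> Ct1 q} \<longleftrightarrow> y - 1 \<in> {x. x + 1 \<in> Ct2 q}" using h by simp
        then show "y \<in> Ct1 q \<longleftrightarrow> y \<in> Ct2 q" by simp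
      qed
    next
      case False
      then show ?thesis using \<open>E0 Ct1 q = E0 Ct2 q\<close> unfolding E0_def by simp
    qed
  qed
qed

end




lemma card_move1: fixes q l :: nat and c x :: int and D D' :: "nat \<Rightarrow> int set" assumes "finite I" "I \<subseteq> {..<l}" "1 \<le> q" "q < l" "c \<in> D q" "c \<notin> D (q - 1)"
  "\<And>p x. p < l \<Longrightarrow> (x \<in> D' p) = (if p = q \<and> x = c then False else if p = q - 1 \<and> x = c then True else x \<in> D p)"
  "q \<in> I \<longleftrightarrow> q - 1 \<in> I"
  shows "card {p \<in> I. x \<in> D' p} = card {p \<in> I. x \<in> D p}"
proof (cases "x = c")
  case True
  show ?thesis unfolding True
  proof (rule card_swap[OF assms(1), of q "q - 1"])
    show "q \<noteq> q - 1" using assms(3) by simp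
    show "(q \<in> I) = (q - 1 \<in> I)" by (rule assms(8))
    show "c \<in> D q" "c \<notin> D (q - 1)" by (rule assms(5), rule assms(6))
    show "c \<notin> D' q" using assms(7)[of q c] assms(4) by simp
    show "c \<in> D' (q - 1)" using assms(7)[of "q - 1" c] assms(3,4) by simp
    fix p assume "p \<in> I" "p \<noteq> q" "p \<noteq> q - 1"
    moreover have "p < l" using \<open>p \<in> I\<close> assms(2) by auto
    ultimately show "(c \<in> D' p) = (c \<in> D p)" using assms(7)[of p c] by simp
  qed
next
  case False
  show ?thesis
  proof (rule card_same)
    fix p assume "p \<in> I"
    then have "p < l" using assms(2) by auto
    then show "(x \<in> D' p) = (x \<in> D p)" using assms(7)[of p x] False by simp
  qed
qed

lemma card_move0: fixes l :: nat and c x :: int and D D' :: "nat \<Rightarrow> int set" assumes "finite I0" "finite Idd" "I0 \<subseteq> {..<l}" "Idd \<subseteq> {..<l}" "2 \<le> l"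
  "c \<in> D 0" "c - 1 \<notin> D (l - 1)"
  "\<And>p x. p < l \<Longrightarrow> (x \<in> D' p) = (if p = 0 \<and> x = c then False else if p = l - 1 \<and> x = c - 1 then True else x \<in> D p)"
  "0 \<in> I0" "l - 1 \<notin> I0" "l - 1 \<in> Idd" "0 \<notin> Idd"
  shows "card {p \<in> I0. x + 1 \<in> D' p} + card {p \<in> Idd. x \<in> D' p} = card {p \<in> I0. x + 1 \<in> D p} + card {p \<in> Idd. x \<in> D p}"
proof (cases "x = c - 1")
  case True
  have h1: "card {p \<in> I0. x + 1 \<in> D' p} + 1 = card {p \<in> I0. x + 1 \<in> D p}"
  proof (rule card_lose[OF assms(1,9)])
    show "x + 1 \<in> D 0" using True assms(6) by simp
    show "x + 1 \<notin> D' 0" using True assms(8)[of 0 "x + 1"] assms(5) by simp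
    fix p assume "p \<in> I0" "p \<noteq> 0"
    moreover have "p < l" "p \<noteq> l - 1" using \<open>p \<in> I0\<close> assms(3,10) by auto
    ultimately show "(x + 1 \<in> D' p) = (x + 1 \<in> D p)" using assms(8)[of p "x + 1"] by simp
  qed
  have h2: "card {p \<in> Idd. x \<in> D p} + 1 = card {p \<in> Idd. x \<in> D' p}"
  proof (rule card_lose[OF assms(2,11)])
    show "x \<in> D' (l - 1)" using True assms(8)[of "l - 1" x] assms(5) by simp
    show "x \<notin> D (l - 1)" using True assms(7) by simp
    fix p assume pI: "p \<in> Idd" "p \<noteq> l - 1"
    moreover have "p < l" using pI assms(4) by auto
    moreover have "p \<noteq> 0"
    proof
      assume "p = 0"
      then show False using pI(1) assms(12) by simp
    qed
    ultimately show "(x \<in> D p) = (x \<in> D' p)" using assms(8)[of p x] by simp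
  qed
  show ?thesis using h1 h2 by simp
next
  case False
  have "card {p \<in> I0. x + 1 \<in> D' p} = card {p \<in> I0. x + 1 \<in> D p}"
  proof (rule card_same)
    fix p assume p: "p \<in> I0"
    then have "p < l" "p \<noteq> l - 1" using assms(3,10) by auto
    then show "(x + 1 \<in> D' p) = (x + 1 \<in> D p)" using assms(8)[of p "x + 1"] False by auto
  qed
  moreover have "card {p \<in> Idd. x \<in> D' p} = card {p \<in> Idd. x \<in> D p}"
  proof (rule card_same)
    fix p assume p: "p \<in> Idd"
    then have "p < l" using assms(4) by auto
    moreover have "p \<noteq> 0" using p assms(12) by (metis)
    ultimately show "(x \<in> D' p) = (x \<in> D p)" using assms(8)[of p x] False by auto
  qed
  ultimately show ?thesis by simp
qed

context epsl
begin

lemma Cbr_cong: assumes "\<And>q. q < l \<Longrightarrow> C1 q = C2 q" shows "Cbr l d e C1 t = Cbr l d e C2 t"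
proof -
  have "\<And>t. {p \<in> Iset l d e t. x \<in> C1 p} = {p \<in> Iset l d e t. x \<in> C2 p}" for x
    using assms Iset_sub by blast
  then show ?thesis unfolding Cbr_def by (intro ext) simp
qed

lemma step_Cbr: assumes "remove_step l (Jset l e) lam mu"
  shows "Cbr l d e (rn l (beta_set 0 mu)) t = Cbr l d e (rn l (beta_set 0 lam)) t"
proof -
  obtain x where lm: "is_partition lam" "is_partition mu" "J_removable l (Jset l e) lam x" "young mu = young lam - {x}"
    using assms unfolding remove_step_def by blast
  have xy: "x \<in> young lam" using lm(3) unfolding J_removable_def removable_def by blast
  obtain a where a: "1 \<le> a" "1 \<le> lam a" "x = (a, lam a)" "mu = lam(a := lam a - 1)"
    using remove_shape[OF lm(1,2) xy lm(4)] by blast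
  define v where "v = vb 0 lam a"
  define B where "B = beta_set 0 lam"
  define B' where "B' = beta_set 0 mu"
  have vB: "v \<in> B" "v - 1 \<notin> B" "B' = insert (v - 1) (B - {v})"
    using beta_remove[OF lm(1,2) a(1,2,4)] unfolding v_def B_def B'_def by auto
  obtain j where j: "j \<in> Jset l e" "content x mod int l = int j mod int l"
    using lm(3) unfolding J_removable_def by blast
  have jl: "j < l" using j(1) unfolding Jset_mem by simp
  have "content x = v - 1" unfolding a(3) v_def content_def vb_def by simp
  then have vm: "(v - 1) mod int l = int j" using j(2) jl by simp
  then have jq: "j = nat ((v - 1) mod int l)" by simp
  define c where "c = (v - 1) div int l + 1"
  have fI: "\<And>t. finite (Iset l d e t)" by (rule finite_Iset)
  show ?thesis
  proof (cases "1 \<le> j")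
    case True
    note mp = move_pos[OF l0 vB jq c_def True]
    have eqI: "j \<in> Iset l d e t \<longleftrightarrow> j - 1 \<in> Iset l d e t" for t
      using J_step[OF True jl] j(1) jl unfolding Iset_mem by auto
    have cm: "card {p \<in> Iset l d e t. y \<in> rn l B' p} = card {p \<in> Iset l d e t. y \<in> rn l B p}" for t y
      by (rule card_move1[OF fI Iset_sub True jl mp(1,2) mp(4) eqI])
    show ?thesis unfolding B_def[symmetric] B'_def[symmetric] Cbr_def using cm by (intro ext) simp
  next
    case False
    then have j0: "j = 0" by simp
    have l2: "2 \<le> l" using zero_J_l2 j(1) j0 by simp
    note mz = move_zero[OF l0 vB jq[unfolded j0] c_def l2]
    have z0: "0 \<in> Iset l d e 0" using J_zero j(1) j0 by simp
    have ld: "l - 1 \<in> Iset l d e d" by (rule last_in_d)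
    have nz: "0 \<notin> Iset l d e t" if "t \<noteq> 0" for t using Iset_disj[OF _ z0] that by metis
    have nl: "l - 1 \<notin> Iset l d e t" if "t \<noteq> d" for t using Iset_disj[OF _ ld] that by metis
    have mid: "card {p \<in> Iset l d e t. y \<in> rn l B' p} = card {p \<in> Iset l d e t. y \<in> rn l B p}"
      if "t \<noteq> 0" "t \<noteq> d" for t y
    proof (rule card_same)
      fix p assume p: "p \<in> Iset l d e t"
      have "p \<noteq> 0" using p nz[OF that(1)] by metis
      moreover have "p \<noteq> l - 1" using p nl[OF that(2)] by metis
      moreover have "p < l" using p Iset_sub by auto
      ultimately show "(y \<in> rn l B' p) = (y \<in> rn l B p)" using mz(3)[of p y] by simp
    qed
    have ends: "card {p \<in> Iset l d e 0. y + 1 \<in> rn l B' p} + card {p \<in> Iset l d e d. y \<in> rn l B' p}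
      = card {p \<in> Iset l d e 0. y + 1 \<in> rn l B p} + card {p \<in> Iset l d e d. y \<in> rn l B p}" for y
      by (rule card_move0[OF fI fI Iset_sub Iset_sub l2 mz(1,2) mz(3) z0 nl ld nz]) (use d0 in auto)
    show ?thesis unfolding B_def[symmetric] B'_def[symmetric] Cbr_def
    proof (intro ext)
      fix y
      show "(if 1 \<le> t \<and> t \<le> d - 1 then card {p \<in> Iset l d e t. y \<in> rn l B' p}
          else card {p \<in> Iset l d e 0. y + 1 \<in> rn l B' p} + card {p \<in> Iset l d e d. y \<in> rn l B' p}) =
        (if 1 \<le> t \<and> t \<le> d - 1 then card {p \<in> Iset l d e t. y \<in> rn l B p}
          else card {p \<in> Iset l d e 0. y + 1 \<in> rn l B p} + card {p \<in> Iset l d e d. y \<in> rn l B p})"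
      proof (cases "1 \<le> t \<and> t \<le> d - 1")
        case True
        then have "t \<noteq> 0" "t \<noteq> d" using d0 by auto
        then show ?thesis unfolding if_P[OF True] by (rule mid)
      next
        case False show ?thesis unfolding if_not_P[OF False] by (rule ends)
      qed
    qed
  qed
qed

lemma terminal_chain: assumes "is_partition nu" "\<not> (\<exists>x. J_removable l (Jset l e) nu x)"
  shows "chainc (rn l (beta_set 0 nu))"
  unfolding chainc_def
proof (intro conjI ballI impI subsetI)
  fix p y assume p: "p \<in> Jset l e" "p \<noteq> 0" and y: "y \<in> rn l (beta_set 0 nu) p"
  have pl: "p < l" using p Jset_mem by simp
  define v where "v = int l * (y - 1) + int p + 1"
  have vin: "v \<in> beta_set 0 nu" using y pl unfolding rn_def v_def by simp
  have e1: "v - 1 = int l * (y - 1) + int p" unfolding v_def by simp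
  have "(int l * (y - 1) + int p) mod int l = int p mod int l" by (rule mod_mult_self4)
  then have "(v - 1) mod int l = int p mod int l" unfolding e1 .
  then have h: "v - 1 \<in> beta_set 0 nu" by (rule terminal_closed[OF assms vin p(1)])
  have e2: "v - 1 = int l * (y - 1) + int (p - 1) + 1" using p(2) unfolding v_def by (simp add: of_nat_diff)
  have "int l * (y - 1) + int (p - 1) + 1 \<in> beta_set 0 nu" using h unfolding e2 .
  then show "y \<in> rn l (beta_set 0 nu) (p - 1)" using pl unfolding rn_def by simp
next
  fix y assume z: "0 \<in> Iset l d e 0" and y: "y \<in> {x. x + 1 \<in> rn l (beta_set 0 nu) 0}"
  have j0: "0 \<in> Jset l e" using J_zero z by simp
  define v where "v = int l * y + 1"
  have vin: "v \<in> beta_set 0 nu" using y l0 unfolding rn_def v_def by simp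
  have e1: "v - 1 = int l * y + int 0" unfolding v_def by simp
  have "(int l * y + int 0) mod int l = int 0 mod int l" by (rule mod_mult_self4)
  then have "(v - 1) mod int l = int 0 mod int l" unfolding e1 .
  then have h: "v - 1 \<in> beta_set 0 nu" by (rule terminal_closed[OF assms vin j0])
  have e2: "v - 1 = int l * (y - 1) + int (l - 1) + 1" using l0 unfolding v_def by (simp add: algebra_simps of_nat_diff)
  have "int l * (y - 1) + int (l - 1) + 1 \<in> beta_set 0 nu" using h unfolding e2 .
  then show "y \<in> rn l (beta_set 0 nu) (l - 1)" using l0 unfolding rn_def by simp
qed

end

lemma rn_inf_bdd: assumes "0 < l" "is_partition nu" "q < l"
  shows "infinite (rn l (beta_set 0 nu) q)" "bdd_above (rn l (beta_set 0 nu) q)"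
proof -
  obtain N0 where N0: "\<And>N. N \<le> N0 \<Longrightarrow> {..<N} \<subseteq> beta_set 0 nu \<and> finite (beta_set 0 nu \<inter> {N..})
     \<and> card (beta_set 0 nu \<inter> {N..}) = nat (0 + 1 - N) \<and> 0 + 1 - N \<ge> 1"
    using charge[OF assms(2)] by blast
  have sub: "{..<N0} \<subseteq> beta_set 0 nu" using N0[of N0] by simp
  have "{.. - \<bar>N0\<bar> - 1} \<subseteq> rn l (beta_set 0 nu) q"
  proof
    fix c assume "c \<in> {.. - \<bar>N0\<bar> - 1}"
    then have c: "c \<le> - \<bar>N0\<bar> - 1" by simp
    have "int l * (c - 1) \<le> 1 * (c - 1)" using c assms(1) by (intro mult_right_mono_neg) auto
    then have "int l * (c - 1) + int q + 1 \<le> int l * (c - 1) + int l" using assms(3) by simp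
    also have "\<dots> = int l * c" by (simp add: algebra_simps)
    also have "\<dots> \<le> 1 * c" using c assms(1) by (intro mult_right_mono_neg) auto
    finally have "int l * (c - 1) + int q + 1 < N0" using c by simp
    then show "c \<in> rn l (beta_set 0 nu) q" using sub assms(3) unfolding rn_def by auto
  qed
  then show "infinite (rn l (beta_set 0 nu) q)" using infinite_Iic finite_subset by blast
  obtain b where b: "\<And>z. z \<in> beta_set 0 nu \<Longrightarrow> z \<le> b" using beta_bdd[OF assms(2)] unfolding bdd_above_def by blast
  have "c \<le> max 1 b" if "c \<in> rn l (beta_set 0 nu) q" for c
  proof (cases "c \<ge> 1")
    case True
    have "int l * (c - 1) + int q + 1 \<le> b" using that b assms(3) unfolding rn_def by simp
    moreover have "1 * (c - 1) \<le> int l * (c - 1)" using True assms(1) by (intro mult_right_mono) auto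
    ultimately show ?thesis by simp
  qed simp
  then show "bdd_above (rn l (beta_set 0 nu) q)" unfolding bdd_above_def by blast
qed




lemma f_ge_iff: assumes "0 < l" "q < l"
  shows "int l * (c - 1) + int q + 1 \<ge> int l * (M - 1) + 1 \<longleftrightarrow> c \<ge> M"
proof
  assume h: "int l * (c - 1) + int q + 1 \<ge> int l * (M - 1) + 1"
  show "c \<ge> M"
  proof (rule ccontr)
    assume "\<not> c \<ge> M"
    then have "c - 1 \<le> M - 2" by simp
    then have "int l * (c - 1) \<le> int l * (M - 2)" by (intro mult_left_mono) auto
    also have "int l * (M - 2) = int l * (M - 1) - int l" by (simp add: algebra_simps)
    finally show False using h assms(2) by simp
  qed
next
  assume "c \<ge> M"
  then have "int l * (M - 1) \<le> int l * (c - 1)" by (intro mult_left_mono) auto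
  then show "int l * (c - 1) + int q + 1 \<ge> int l * (M - 1) + 1" by simp
qed

lemma chi_partition: assumes "0 < l" "\<And>q. q < l \<Longrightarrow> is_partition (L q)" "(\<Sum>q<l. r q) = 0"
  shows "\<exists>nu. is_partition nu \<and> beta_set 0 nu = chi l (\<lambda>q. beta_set (r q) (L q))"
proof -
  define Bq where "Bq q = beta_set (r q) (L q)" for q
  define P where "P q N \<longleftrightarrow> {..<N} \<subseteq> Bq q \<and> finite (Bq q \<inter> {N..})
     \<and> card (Bq q \<inter> {N..}) = nat (r q + 1 - N) \<and> r q + 1 - N \<ge> 1" for q N
  have "\<forall>q. \<exists>N0. q < l \<longrightarrow> (\<forall>N \<le> N0. P q N)"
  proof
    fix q show "\<exists>N0. q < l \<longrightarrow> (\<forall>N \<le> N0. P q N)"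
    proof (cases "q < l")
      case True
      obtain N0 where "\<And>N. N \<le> N0 \<Longrightarrow> P q N"
        using charge[OF assms(2)[OF True], of "r q"] unfolding P_def Bq_def by blast
      then show ?thesis by blast
    qed simp
  qed
  then obtain N0 where N0: "\<And>q N. q < l \<Longrightarrow> N \<le> N0 q \<Longrightarrow> P q N" by metis
  define M where "M = Min (N0 ` {..<l})"
  have PM: "P q M" if "q < l" for q
  proof -
    have "M \<le> N0 q" unfolding M_def using that by (intro Min_le) auto
    then show ?thesis using N0 that by blast
  qed
  define N where "N = int l * (M - 1) + 1"
  define S where "S = chi l Bq"
  define f where "f = (\<lambda>(q::nat, c::int). int l * (c - 1) + int q + 1)"
  define Sg where "Sg = (SIGMA q:{..<l}. Bq q \<inter> {M..})"
  have below: "{..<N} \<subseteq> S"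
  proof
    fix y assume "y \<in> {..<N}"
    then have y: "y < N" by simp
    define q where "q = nat ((y - 1) mod int l)"
    define c where "c = (y - 1) div int l + 1"
    have yq: "y = int l * (c - 1) + int q + 1" "q < l" using dec_ex[OF assms(1), of y] unfolding q_def c_def by simp_all
    have "\<not> c \<ge> M"
    proof
      assume "c \<ge> M"
      then have "int l * (c - 1) + int q + 1 \<ge> N" unfolding N_def using f_ge_iff[OF assms(1) yq(2)] by blast
      then show False using y yq(1) by simp
    qed
    then have "c \<in> Bq q" using PM[OF yq(2)] unfolding P_def by auto
    then show "y \<in> S" unfolding S_def chi_def using yq by blast
  qed
  have above: "S \<inter> {N..} = f ` Sg"
  proof (intro equalityI subsetI)
    fix y assume "y \<in> S \<inter> {N..}"
    then obtain q c where qc: "q < l" "c \<in> Bq q" "y = int l * (c - 1) + int q + 1" "y \<ge> N"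
      unfolding S_def chi_def by auto
    then have "c \<ge> M" using f_ge_iff[OF assms(1) qc(1)] unfolding N_def by blast
    then show "y \<in> f ` Sg" unfolding Sg_def f_def using qc by (intro image_eqI[of _ _ "(q, c)"]) auto
  next
    fix y assume "y \<in> f ` Sg"
    then obtain q c where qc: "q < l" "c \<in> Bq q" "c \<ge> M" "y = int l * (c - 1) + int q + 1"
      unfolding Sg_def f_def by auto
    then have "y \<ge> N" using f_ge_iff[OF assms(1) qc(1)] unfolding N_def by blast
    moreover have "y \<in> S" unfolding S_def chi_def using qc by blast
    ultimately show "y \<in> S \<inter> {N..}" by simp
  qed
  have inj: "inj_on f Sg"
  proof (rule inj_onI)
    fix a b assume ab: "a \<in> Sg" "b \<in> Sg" "f a = f b"
    obtain q c where a: "a = (q, c)" "q < l" using ab(1) unfolding Sg_def by auto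
    obtain q' c' where b: "b = (q', c')" "q' < l" using ab(2) unfolding Sg_def by auto
    show "a = b" using dec_uniq[OF assms(1) a(2) b(2), of c c'] ab(3) a b unfolding f_def by simp
  qed
  have fin: "\<And>q. q < l \<Longrightarrow> finite (Bq q \<inter> {M..})" using PM unfolding P_def by blast
  have finSg: "finite Sg" unfolding Sg_def using fin by (intro finite_SigmaI) auto
  have "card Sg = (\<Sum>q<l. card (Bq q \<inter> {M..}))" unfolding Sg_def using fin by (subst card_SigmaI) auto
  also have "\<dots> = (\<Sum>q<l. nat (r q + 1 - M))" using PM unfolding P_def by (intro sum.cong) auto
  finally have cS: "int (card Sg) = (\<Sum>q<l. int (nat (r q + 1 - M)))" by simp
  also have "\<dots> = (\<Sum>q<l. (r q + 1 - M))"
  proof (rule sum.cong)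
    fix q assume "q \<in> {..<l}"
    then have "r q + 1 - M \<ge> 1" using PM unfolding P_def by auto
    then show "int (nat (r q + 1 - M)) = r q + 1 - M" by simp
  qed simp
  also have "\<dots> = (\<Sum>q<l. r q) + int l * (1 - M)" by (simp add: sum.distrib sum_subtractf algebra_simps)
  finally have cS2: "int (card Sg) = 0 + 1 - N" using assms(3) unfolding N_def by (simp add: algebra_simps)
  have "card (S \<inter> {N..}) = card Sg" unfolding above using inj by (simp add: card_image)
  then have c3: "card (S \<inter> {N..}) = nat (0 + 1 - N)" using cS2 by simp
  have c4: "0 + 1 - N \<ge> 0" using cS2 by simp
  have "finite (S \<inter> {N..})" unfolding above using finSg by simp
  then obtain nu where "is_partition nu" "beta_set 0 nu = S" using conv[OF below _ c3 c4] by blast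
  then show ?thesis unfolding S_def Bq_def by blast
qed




theorem theorem3p11:
  fixes l n d :: nat and H :: "nat \<Rightarrow> rat" and r :: "nat \<Rightarrow> int" and w :: "nat \<Rightarrow> nat"
    and lams :: "nat \<Rightarrow> nat \<Rightarrow> nat"
  assumes "0 < l" and "0 < n" and "0 < d"
    and "\<forall>i\<in>{1..<l}. of_nat d * H i \<in> \<int>"
    and "(\<Sum>i<l. r i) = 0"
    and "w permutes {..<l}"
    and "\<forall>i<l. 0 \<le> eps l H r w i \<and> eps l H r w i \<le> 1"
    and "lams \<in> multipartitions l n"
  shows "beta_set 0 (heart l (Jset l (eps l H r w)) (tau l r (perm_mp w lams)))
         = chi l (Ctilde l d (eps l H r w) (Cseq r w lams))"
proof -
  note ep = eps_props[OF assms(1,4,6), of r]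
  interpret epsl l d "eps l H r w"
    using assms(1,3,7) ep by unfold_locales auto
  define C where "C = Cseq r w lams"
  define J where "J = Jset l (eps l H r w)"
  have Lp: "is_partition (lams (inv w q))" if "q < l" for q
  proof -
    have "inv w q \<in> {..<l}" using permutes_in_image[OF permutes_inv[OF assms(6)]] that by simp
    then show ?thesis using assms(8) unfolding multipartitions_def by auto
  qed
  have Ceq: "(\<lambda>q. beta_set (r q) (perm_mp w lams q)) = C" unfolding C_def Cseq_def perm_mp_def ..
  have Ceq2: "(\<lambda>q. beta_set (r q) (lams (inv w q))) = C" unfolding C_def Cseq_def ..
  have "\<exists>nu. is_partition nu \<and> beta_set 0 nu = chi l (\<lambda>q. beta_set (r q) (lams (inv w q)))"
    by (rule chi_partition[OF assms(1)]) (use Lp assms(5) in auto)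
  then obtain nu0 where nu0: "is_partition nu0" "beta_set 0 nu0 = chi l C"
    unfolding Ceq2 by blast
  have tau: "tau l r (perm_mp w lams) = nu0"
    unfolding tau_def assms(5) Ceq
  proof (rule the_equality)
    show "is_partition nu0 \<and> beta_set 0 nu0 = chi l C" using nu0 by simp
    fix nu assume "is_partition nu \<and> beta_set 0 nu = chi l C"
    then show "nu = nu0" using beta_inj[OF _ nu0(1)] nu0(2) by blast
  qed
  have inv: "is_partition nu \<and> (\<forall>t. Cbr l d (eps l H r w) (rn l (beta_set 0 nu)) t = Cbr l d (eps l H r w) C t)"
    if "(remove_step l J)\<^sup>*\<^sup>* nu0 nu" for nu
    using that
  proof (induction rule: rtranclp_induct)
    case base
    have "Cbr l d (eps l H r w) (rn l (beta_set 0 nu0)) t = Cbr l d (eps l H r w) C t" for t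
      unfolding nu0(2) by (rule Cbr_cong) (rule rn_chi[OF assms(1)])
    then show ?case using nu0(1) by simp
  next
    case (step y z)
    have "is_partition z" using step.hyps(2) unfolding remove_step_def by blast
    moreover have "Cbr l d (eps l H r w) (rn l (beta_set 0 z)) t = Cbr l d (eps l H r w) C t" for t
      using step_Cbr[OF step.hyps(2)[unfolded J_def], of t] step.IH by simp
    ultimately show ?case by simp
  qed
  define Q where "Q Ct \<longleftrightarrow> (\<forall>q<l. infinite (Ct q) \<and> bdd_above (Ct q)) \<and> (\<forall>q\<ge>l. Ct q = {}) \<and>
      (\<forall>t\<le>d. Cbr l d (eps l H r w) Ct t = Cbr l d (eps l H r w) C t) \<and>
      (\<forall>p\<in>Jset l (eps l H r w). p \<noteq> 0 \<longrightarrow> Ct p \<subseteq> Ct (p - 1)) \<and>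
      (0 \<in> Iset l d (eps l H r w) 0 \<longrightarrow> {x. x + 1 \<in> Ct 0} \<subseteq> Ct (l - 1))" for Ct
  have good: "Q (rn l (beta_set 0 nu))"
    if "(remove_step l J)\<^sup>*\<^sup>* nu0 nu" "\<not> (\<exists>x. J_removable l J nu x)" for nu
  proof -
    have p: "is_partition nu" using inv[OF that(1)] by simp
    have "chainc (rn l (beta_set 0 nu))" using terminal_chain[OF p] that(2) unfolding J_def by simp
    then show ?thesis unfolding Q_def chainc_def
      using inv[OF that(1)] rn_inf_bdd[OF assms(1) p] by (simp add: rn_def)
  qed
  have uniq: "A = B" if "Q A" "Q B" for A B
  proof
    fix q show "A q = B q"
    proof (cases "q < l")
      case True
      show ?thesis
      proof (rule unique[OF _ _ _ True])
        show "chainc A" "chainc B" using that unfolding Q_def chainc_def by blast+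
        fix t assume "t \<le> d"
        then show "Cbr l d (eps l H r w) A t = Cbr l d (eps l H r w) B t" using that unfolding Q_def by simp
      qed
    next
      case False then show ?thesis using that unfolding Q_def by simp
    qed
  qed
  obtain nu where nu: "(remove_step l J)\<^sup>*\<^sup>* nu0 nu" "\<not> (\<exists>x. J_removable l J nu x)"
    using heart_exists[OF nu0(1)] by blast
  have heart: "heart l J nu0 = nu"
    unfolding heart_def
  proof (rule the_equality)
    show "(remove_step l J)\<^sup>*\<^sup>* nu0 nu \<and> \<not> (\<exists>x. J_removable l J nu x)" using nu by simp
    fix nu' assume h: "(remove_step l J)\<^sup>*\<^sup>* nu0 nu' \<and> \<not> (\<exists>x. J_removable l J nu' x)"
    have "rn l (beta_set 0 nu') = rn l (beta_set 0 nu)" using uniq good h nu by blast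
    then have "beta_set 0 nu' = beta_set 0 nu" using chi_rn[OF assms(1)] by metis
    then show "nu' = nu" using beta_inj inv h nu(1) by blast
  qed
  have ct0: "Ctilde l d (eps l H r w) C = (THE Ct. Q Ct)" unfolding Ctilde_def Q_def ..
  have ct: "Ctilde l d (eps l H r w) C = rn l (beta_set 0 nu)"
    unfolding ct0
  proof (rule the_equality)
    show "Q (rn l (beta_set 0 nu))" using good[OF nu] .
    fix Ct assume "Q Ct" then show "Ct = rn l (beta_set 0 nu)" using uniq good[OF nu] by blast
  qed
  have "beta_set 0 (heart l (Jset l (eps l H r w)) (tau l r (perm_mp w lams))) = beta_set 0 nu"
    using tau heart unfolding J_def by simp
  also have "\<dots> = chi l (rn l (beta_set 0 nu))" using chi_rn[OF assms(1)] by simp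
  also have "\<dots> = chi l (Ctilde l d (eps l H r w) (Cseq r w lams))" using ct unfolding C_def by simp
  finally show ?thesis .
qed


end
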